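(* Let $T>0$ and let $X=\{X(t)\colon t\in[0,T]\}$ be a mean zero second order process satisfying (C1) and (C2) with constants $\gamma\in(0,1)$ and $\kappa>0$. Let $(\pi_n)_{n\in\mathbb N}$ be a sequence of partitions of $[0,T]$ with asymptotic ratios $(\ell_k)_{k\ge1}$ and range of asymptotic ratios $\mathcal L$. Let $$g(\lambda)=\frac{1+\lambda^{2\gamma-1}-(1+\lambda)^{2\gamma-1}}{\lambda^{\gamma-1/2}},\qquad\lambda>0.$$ (a) If $g$ is invariant on $\mathcal L$, then $\lim_{n\to\infty}\mathbb{E}V^{(2)}_{\pi_n}(X,2)=2\kappa^2 g(\ell)T$ for any $\ell\in\mathcal L$. (b) If the functions $\ell_n(t)=\sum_{k=1}^{N_n-1}\ell_k\mathbf 1_{[t^n_k,t^n_{k+1})}(t)$ converge uniformly on $[0,T]$ to a function $\ell(t)$, then $\lim_{n\to\infty}\mathbb{E}V^{(2)}_{\pi_n}(X,2)=2\kappa^2\int_0^T g(\ell(t))\,dt$.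
   Context: $\sigma_X^2(s,t)=\mathbb{E}[X(t)-X(s)]^2$. $\Psi$ is the class of continuous $\varphi\colon(0,T]\to[0,\infty)$ with $\varphi(h)\to0$, $L(h):=\varphi(h)/h\to\infty$, $hL(h)^3\to0$ as $h\downarrow0$. (C1): $\sigma_X(0,\delta)=O(\delta^\gamma)$ as $\delta\downarrow0$. (C2): for every $\varphi\in\Psi$, $\sup_{\varphi(\delta)\le t\le T-\delta}\sup_{0<h\le\delta}|\sigma_X(t,t+h)/(\kappa h^\gamma)-1|\to0$ as $\delta\downarrow0$. Partitions: $\pi_n=\{0=t^n_0<t^n_1<\dots<t^n_{N_n}=T\}$ with $(N_n)$ a strictly increasing sequence of natural numbers; $\Delta^n_kt=t^n_k-t^n_{k-1}$, $m_n=\max_k\Delta^n_kt$, $p_n=\min_k\Delta^n_kt$. $(\pi_n)$ has asymptotic ratios $(\ell_k)_{k\ge1}\subset(0,\infty)$ if (1) there is $c\ge1$ with $m_n\le cp_n$ for all $n$, and (2) $\lim_{n\to\infty}\sup_{1\le k\le N_n}|\Delta^n_{k-1}t/\Delta^n_kt-\ell_k|=0$; $\mathcal L=\{\ell_1,\ell_2,\dots\}$ is the range of asymptotic ratios. A function $g$ is invariant on $\mathcal L$ if $g(\ell)=g(\hat\ell)$ for all $\ell,\hat\ell\in\mathcal L$. Second order quadratic variation (with index $\gamma$): $$V^{(2)}_{\pi_n}(X,2)=2\sum_{k=1}^{N_n-1}\frac{\Delta^n_{k+1}t\,(\Delta^{(2)n}_{ir,k}X)^2}{(\Delta^n_kt)^{\gamma+1/2}(\Delta^n_{k+1}t)^{\gamma+1/2}[\Delta^n_kt+\Delta^n_{k+1}t]},$$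 $$\Delta^{(2)n}_{ir,k}X=\Delta^n_kt\,X(t^n_{k+1})+\Delta^n_{k+1}t\,X(t^n_{k-1})-(\Delta^n_kt+\Delta^n_{k+1}t)X(t^n_k).$$ *)

theory Defs
  imports "HOL-Probability.Probability" "HOL-Library.Landau_Symbols"
begin

text \<open>Partitions: tp n k is the k-th point t^n_k of the n-th partition, k = 0..N n.\<close>

definition Dt :: "(nat \<Rightarrow> nat \<Rightarrow> real) \<Rightarrow> nat \<Rightarrow> nat \<Rightarrow> real" where
  "Dt tp n k = tp n k - tp n (k - 1)"

definition mesh_max :: "(nat \<Rightarrow> nat) \<Rightarrow> (nat \<Rightarrow> nat \<Rightarrow> real) \<Rightarrow> nat \<Rightarrow> real" where
  "mesh_max N tp n = Max (Dt tp n ` {1..N n})"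

definition mesh_min :: "(nat \<Rightarrow> nat) \<Rightarrow> (nat \<Rightarrow> nat \<Rightarrow> real) \<Rightarrow> nat \<Rightarrow> real" where
  "mesh_min N tp n = Min (Dt tp n ` {1..N n})"

definition partition_seq :: "real \<Rightarrow> (nat \<Rightarrow> nat) \<Rightarrow> (nat \<Rightarrow> nat \<Rightarrow> real) \<Rightarrow> bool" where
  "partition_seq T N tp \<longleftrightarrow> strict_mono N \<and>
     (\<forall>n. tp n 0 = 0 \<and> tp n (N n) = T \<and> (\<forall>k < N n. tp n k < tp n (Suc k)))"

text \<open>Asymptotic ratios. The ratio Dt(k-1)/Dt(k) is only defined for k >= 2
  (t^n_{-1} does not exist), so the uniform convergence is required over 2 <= k <= N n.\<close>
definition has_asymptotic_ratios ::
  "(nat \<Rightarrow> nat) \<Rightarrow> (nat \<Rightarrow> nat \<Rightarrow> real) \<Rightarrow> (nat \<Rightarrow> real) \<Rightarrow> bool" where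
  "has_asymptotic_ratios N tp ell \<longleftrightarrow>
     (\<forall>k\<ge>1. ell k > 0) \<and>
     (\<exists>c\<ge>1. \<forall>n. mesh_max N tp n \<le> c * mesh_min N tp n) \<and>
     (\<forall>\<epsilon>>0. \<forall>\<^sub>F n in sequentially. \<forall>k. 2 \<le> k \<and> k \<le> N n \<longrightarrow>
         \<bar>Dt tp n (k - 1) / Dt tp n k - ell k\<bar> < \<epsilon>)"

definition ratio_range :: "(nat \<Rightarrow> real) \<Rightarrow> real set" where
  "ratio_range ell = ell ` {1..}"

definition invariant_on :: "(real \<Rightarrow> real) \<Rightarrow> real set \<Rightarrow> bool" where
  "invariant_on g L \<longleftrightarrow> (\<forall>a\<in>L. \<forall>b\<in>L. g a = g b)"

definition D2 :: "(nat \<Rightarrow> nat \<Rightarrow> real) \<Rightarrow> (real \<Rightarrow> real) \<Rightarrow> nat \<Rightarrow> nat \<Rightarrow> real" where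
  "D2 tp x n k = Dt tp n k * x (tp n (k + 1)) + Dt tp n (k + 1) * x (tp n (k - 1))
                 - (Dt tp n k + Dt tp n (k + 1)) * x (tp n k)"

definition V2 :: "real \<Rightarrow> (nat \<Rightarrow> nat) \<Rightarrow> (nat \<Rightarrow> nat \<Rightarrow> real) \<Rightarrow> (real \<Rightarrow> real) \<Rightarrow> nat \<Rightarrow> real" where
  "V2 \<gamma> N tp x n = 2 * (\<Sum>k = 1..N n - 1.
      Dt tp n (k + 1) * (D2 tp x n k)\<^sup>2 /
      (Dt tp n k powr (\<gamma> + 1/2) * Dt tp n (k + 1) powr (\<gamma> + 1/2) * (Dt tp n k + Dt tp n (k + 1))))"

definition sigmaX :: "'a measure \<Rightarrow> (real \<Rightarrow> 'a \<Rightarrow> real) \<Rightarrow> real \<Rightarrow> real \<Rightarrow> real" where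
  "sigmaX M X s t = sqrt (\<integral>\<omega>. (X t \<omega> - X s \<omega>)\<^sup>2 \<partial>M)"

definition Psi :: "real \<Rightarrow> (real \<Rightarrow> real) set" where
  "Psi T = {\<phi>. continuous_on {0<..T} \<phi> \<and> (\<forall>h\<in>{0<..T}. \<phi> h \<ge> 0) \<and>
              (\<phi> \<longlongrightarrow> 0) (at_right 0) \<and>
              filterlim (\<lambda>h. \<phi> h / h) at_top (at_right 0) \<and>
              ((\<lambda>h. h * (\<phi> h / h) ^ 3) \<longlongrightarrow> 0) (at_right 0)}"

definition cond_C1 :: "'a measure \<Rightarrow> (real \<Rightarrow> 'a \<Rightarrow> real) \<Rightarrow> real \<Rightarrow> bool" where
  "cond_C1 M X \<gamma> \<longleftrightarrow> (\<lambda>\<delta>. sigmaX M X 0 \<delta>) \<in> O[at_right 0](\<lambda>\<delta>. \<delta> powr \<gamma>)"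

text \<open>(C2): the supremum tends to 0, written out as: for every eps it is eventually <= eps.\<close>
definition cond_C2 :: "'a measure \<Rightarrow> (real \<Rightarrow> 'a \<Rightarrow> real) \<Rightarrow> real \<Rightarrow> real \<Rightarrow> real \<Rightarrow> bool" where
  "cond_C2 M X T \<gamma> \<kappa> \<longleftrightarrow> (\<forall>\<phi>\<in>Psi T. \<forall>\<epsilon>>0. \<forall>\<^sub>F \<delta> in at_right 0.
      \<forall>t h. \<phi> \<delta> \<le> t \<and> t \<le> T - \<delta> \<and> 0 < h \<and> h \<le> \<delta> \<longrightarrow>
        \<bar>sigmaX M X t (t + h) / (\<kappa> * h powr \<gamma>) - 1\<bar> \<le> \<epsilon>)"

definition gfun :: "real \<Rightarrow> real \<Rightarrow> real" where
  "gfun \<gamma> x = (1 + x powr (2 * \<gamma> - 1) - (1 + x) powr (2 * \<gamma> - 1)) / x powr (\<gamma> - 1/2)"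

definition ell_step :: "(nat \<Rightarrow> nat) \<Rightarrow> (nat \<Rightarrow> nat \<Rightarrow> real) \<Rightarrow> (nat \<Rightarrow> real) \<Rightarrow> nat \<Rightarrow> real \<Rightarrow> real" where
  "ell_step N tp ell n t = (\<Sum>k = 1..N n - 1. ell k * indicator {tp n k..<tp n (k + 1)} t)"

end

theory Submission
  imports Defs "HOL-Real_Asymp.Real_Asymp"
begin

locale part =
  fixes T :: real and N :: "nat \<Rightarrow> nat" and tp :: "nat \<Rightarrow> nat \<Rightarrow> real" and c :: real
  assumes T_pos: "T > 0" and ps: "partition_seq T N tp" and c1: "c \<ge> 1"
    and cmesh: "\<And>n. mesh_max N tp n \<le> c * mesh_min N tp n"
begin

lemma tp0: "tp n 0 = 0" and tpN: "tp n (N n) = T" and tpS: "k < N n \<Longrightarrow> tp n k < tp n (Suc k)"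
  and Nmono: "strict_mono N"
  using ps unfolding partition_seq_def by auto

lemma N_pos: "N n \<ge> 1"
proof (rule ccontr)
  assume "\<not> N n \<ge> 1" then have "N n = 0" by simp
  then show False using tp0[of n] tpN[of n] T_pos by simp
qed

lemma N_ge: "N n \<ge> n"
  using Nmono strict_mono_imp_increasing by blast

lemma tp_mono_aux: "k + d \<le> N n \<Longrightarrow> tp n k \<le> tp n (k + d)"
proof (induction d)
  case 0 then show ?case by simp
next
  case (Suc d)
  then have "tp n k \<le> tp n (k + d)" by simp
  also have "\<dots> < tp n (Suc (k + d))" using tpS[of "k+d" n] Suc.prems by simp
  finally show ?case by simp
qed

lemma tp_mono: "k \<le> j \<Longrightarrow> j \<le> N n \<Longrightarrow> tp n k \<le> tp n j"
  using tp_mono_aux[of k "j - k" n] by simp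

lemma tp_strict: "k < j \<Longrightarrow> j \<le> N n \<Longrightarrow> tp n k < tp n j"
proof -
  assume a: "k < j" "j \<le> N n"
  have "tp n k < tp n (Suc k)" using tpS a by simp
  also have "\<dots> \<le> tp n j" using tp_mono a by simp
  finally show ?thesis .
qed

lemma tp_range: "k \<le> N n \<Longrightarrow> tp n k \<in> {0..T}"
  using tp_mono[of 0 k n] tp_mono[of k "N n" n] tp0 tpN by auto

lemma Dt_pos: "1 \<le> k \<Longrightarrow> k \<le> N n \<Longrightarrow> Dt tp n k > 0"
  unfolding Dt_def using tpS[of "k - 1" n] by simp

abbreviation "mx n \<equiv> mesh_max N tp n"
abbreviation "mn n \<equiv> mesh_min N tp n"

lemma Dt_le: "1 \<le> k \<Longrightarrow> k \<le> N n \<Longrightarrow> Dt tp n k \<le> mx n"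
  unfolding mesh_max_def by (rule Max_ge) auto

lemma Dt_ge: "1 \<le> k \<Longrightarrow> k \<le> N n \<Longrightarrow> mn n \<le> Dt tp n k"
  unfolding mesh_min_def by (rule Min_le) auto

lemma mn_pos: "mn n > 0"
proof -
  have "mn n \<in> Dt tp n ` {1..N n}" unfolding mesh_min_def
    using N_pos[of n] by (intro Min_in) auto
  then show ?thesis using Dt_pos by auto
qed

lemma mn_le_mx: "mn n \<le> mx n"
  using Dt_ge[of 1 n] Dt_le[of 1 n] N_pos[of n] by simp

lemma mx_pos: "mx n > 0" using mn_pos mn_le_mx less_le_trans by blast

lemma sum_Dt: "j \<le> N n \<Longrightarrow> (\<Sum>k=1..j. Dt tp n k) = tp n j"
proof (induction j)
  case 0 then show ?case by (simp add: tp0)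
next
  case (Suc j) then show ?case by (simp add: Dt_def)
qed

lemma N_mn: "real (N n) * mn n \<le> T"
proof -
  have "real (N n) * mn n = (\<Sum>k=1..N n. mn n)" by simp
  also have "\<dots> \<le> (\<Sum>k=1..N n. Dt tp n k)" by (rule sum_mono) (use Dt_ge in auto)
  also have "\<dots> = T" using sum_Dt[of "N n" n] tpN by simp
  finally show ?thesis .
qed

lemma N_mx: "real (N n) * mx n \<le> c * T"
proof -
  have "real (N n) * mx n \<le> real (N n) * (c * mn n)" using cmesh by (simp add: mult_left_mono)
  also have "\<dots> = c * (real (N n) * mn n)" by simp
  also have "\<dots> \<le> c * T" using N_mn c1 by (simp add: mult_left_mono)
  finally show ?thesis .
qed

lemma mx_lim: "mx \<longlonglongrightarrow> 0"
proof (rule tendsto_sandwich[of "\<lambda>_. 0" _ _ "\<lambda>n. c * T / real n"])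
  show "\<forall>\<^sub>F n in sequentially. 0 \<le> mx n" by (intro always_eventually allI) (simp add: less_imp_le mx_pos)
  show "\<forall>\<^sub>F n in sequentially. mx n \<le> c * T / real n"
    using eventually_gt_at_top[of 0]
  proof eventually_elim
    case (elim n)
    have "real n * mx n \<le> real (N n) * mx n" using N_ge[of n] mx_pos[of n] by (simp add: mult_right_mono)
    also have "\<dots> \<le> c * T" by (rule N_mx)
    finally show ?case using elim by (simp add: field_simps)
  qed
  show "(\<lambda>n. c * T / real n) \<longlonglongrightarrow> 0"
    by (intro tendsto_divide_0[OF tendsto_const] filterlim_at_top_imp_at_infinity[OF filterlim_real_sequentially])
qed simp

lemma tp_ge: "j \<le> N n \<Longrightarrow> real j * mn n \<le> tp n j"
proof -
  assume j: "j \<le> N n"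
  have "real j * mn n = (\<Sum>k=1..j. mn n)" by simp
  also have "\<dots> \<le> (\<Sum>k=1..j. Dt tp n k)" by (rule sum_mono) (use Dt_ge j in auto)
  also have "\<dots> = tp n j" using sum_Dt j by simp
  finally show ?thesis .
qed

lemma tp1_le: "tp n 1 \<le> mx n"
  using Dt_le[of 1 n] N_pos[of n] by (simp add: Dt_def tp0)

lemma locate: "tp n 0 \<le> t \<Longrightarrow> t < tp n K \<Longrightarrow> K \<le> N n \<Longrightarrow> \<exists>j<K. tp n j \<le> t \<and> t < tp n (Suc j)"
proof (induction K)
  case 0 then show ?case by simp
next
  case (Suc K)
  show ?case
  proof (cases "t < tp n K")
    case True then show ?thesis using Suc by (metis Suc_leD less_SucI)
  next
    case False then show ?thesis using Suc.prems by auto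
  qed
qed

lemma locate1: "tp n 1 \<le> t \<Longrightarrow> t < T \<Longrightarrow> \<exists>j. 1 \<le> j \<and> j \<le> N n - 1 \<and> tp n j \<le> t \<and> t < tp n (j+1)"
proof -
  assume a: "tp n 1 \<le> t" "t < T"
  have "tp n 0 \<le> t" using a tp_mono[of 0 1 n] N_pos[of n] by simp
  then obtain j where j: "j < N n" "tp n j \<le> t" "t < tp n (Suc j)"
    using locate[of n t "N n"] a tpN by auto
  have "j \<noteq> 0"
  proof
    assume "j = 0" then show False using j a by simp
  qed
  then show ?thesis using j by (intro exI[of _ j]) auto
qed

lemma onehot:
  assumes "1 \<le> j" "j \<le> N n - 1" "tp n j \<le> t" "t < tp n (j+1)"
  shows "(\<Sum>k=1..N n - 1. f k * indicator {tp n k..<tp n (k+1)} t) = (f j :: real)"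
proof -
  have "(\<Sum>k=1..N n - 1. f k * indicator {tp n k..<tp n (k+1)} t) =
        (\<Sum>k\<in>{j}. f k * indicator {tp n k..<tp n (k+1)} t)"
  proof (rule sum.mono_neutral_right)
    show "\<forall>k\<in>{1..N n - 1} - {j}. f k * indicator {tp n k..<tp n (k + 1)} t = 0"
    proof
      fix k assume k: "k \<in> {1..N n - 1} - {j}"
      have "t \<notin> {tp n k..<tp n (k+1)}"
      proof (cases "k < j")
        case True
        then have "tp n (k+1) \<le> tp n j" using tp_mono[of "k+1" j n] assms by simp
        then show ?thesis using assms by auto
      next
        case False
        then have "j + 1 \<le> k" using k by auto
        then have "tp n (j+1) \<le> tp n k" using tp_mono[of "j+1" k n] k by auto
        then show ?thesis using assms by auto
      qed
      then show "f k * indicator {tp n k..<tp n (k + 1)} t = 0" by simp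
    qed
  qed (use assms in auto)
  also have "\<dots> = f j" using assms by simp
  finally show ?thesis .
qed

lemma onehot0:
  assumes "t < tp n 1 \<or> T \<le> t"
  shows "(\<Sum>k=1..N n - 1. f k * indicator {tp n k..<tp n (k+1)} t) = (0 :: real)"
proof (rule sum.neutral, rule ballI)
  fix k assume k: "k \<in> {1..N n - 1}"
  have "tp n 1 \<le> tp n k" "tp n (k+1) \<le> T" using tp_mono[of 1 k n] tp_mono[of "k+1" "N n" n] tpN k by auto
  then have "t \<notin> {tp n k..<tp n (k+1)}" using assms by auto
  then show "f k * indicator {tp n k..<tp n (k + 1)} t = 0" by simp
qed

end


definition termf :: "real \<Rightarrow> real \<Rightarrow> real \<Rightarrow> real \<Rightarrow> real \<Rightarrow> real \<Rightarrow> real" where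
  "termf \<gamma> a b Sa Sb Sab = 2 * b * (a * (a + b) * Sb + b * (a + b) * Sa - a * b * Sab) /
      (a powr (\<gamma> + 1/2) * b powr (\<gamma> + 1/2) * (a + b))"

lemma termf_diff: "termf \<gamma> a b Sa Sb Sab - termf \<gamma> a b Sa' Sb' Sab' = termf \<gamma> a b (Sa - Sa') (Sb - Sb') (Sab - Sab')"
  unfolding termf_def by (simp add: diff_divide_distrib[symmetric] algebra_simps)

lemma termf_bound:
  assumes g: "0 < \<gamma>" "\<gamma> < 1" and c: "c \<ge> 1" and m: "0 < m"
    and a: "m / c \<le> a" "a \<le> m" and b: "m / c \<le> b" "b \<le> m"
    and B: "\<bar>Sa\<bar> \<le> B" "\<bar>Sb\<bar> \<le> B" "\<bar>Sab\<bar> \<le> B"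
  shows "\<bar>termf \<gamma> a b Sa Sb Sab\<bar> \<le> 5 * c ^ 4 * m powr (1 - 2 * \<gamma>) * B"
proof -
  define q where "q = m / c"
  have q: "0 < q" using m c by (simp add: q_def)
  have a0: "0 < a" "0 < b" using a b q q_def by auto
  have B0: "0 \<le> B" using B(1) by simp
  have n1: "\<bar>a * (a + b) * Sb\<bar> \<le> 2 * m^2 * B"
  proof -
    have "\<bar>a * (a + b) * Sb\<bar> = a * (a + b) * \<bar>Sb\<bar>" using a0 by (simp add: abs_mult)
    also have "\<dots> \<le> m * (2 * m) * B" using a b a0 B B0 by (intro mult_mono) auto
    finally show ?thesis by (simp add: power2_eq_square)
  qed
  have n2: "\<bar>b * (a + b) * Sa\<bar> \<le> 2 * m^2 * B"
  proof -
    have "\<bar>b * (a + b) * Sa\<bar> = b * (a + b) * \<bar>Sa\<bar>" using a0 by (simp add: abs_mult)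
    also have "\<dots> \<le> m * (2 * m) * B" using a b a0 B B0 by (intro mult_mono) auto
    finally show ?thesis by (simp add: power2_eq_square)
  qed
  have n3: "\<bar>a * b * Sab\<bar> \<le> m^2 * B"
  proof -
    have "\<bar>a * b * Sab\<bar> = a * b * \<bar>Sab\<bar>" using a0 by (simp add: abs_mult)
    also have "\<dots> \<le> m * m * B" using a b a0 B B0 by (intro mult_mono) auto
    finally show ?thesis by (simp add: power2_eq_square)
  qed
  have num: "\<bar>a * (a + b) * Sb + b * (a + b) * Sa - a * b * Sab\<bar> \<le> 5 * m^2 * B"
    using n1 n2 n3 by linarith
  have den: "2 * q powr (2 * \<gamma> + 2) \<le> a powr (\<gamma> + 1/2) * b powr (\<gamma> + 1/2) * (a + b)"
  proof -
    have "q powr (\<gamma> + 1/2) \<le> a powr (\<gamma> + 1/2)" using a q g by (intro powr_mono2) (auto simp: q_def)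
    moreover have "q powr (\<gamma> + 1/2) \<le> b powr (\<gamma> + 1/2)" using b q g by (intro powr_mono2) (auto simp: q_def)
    ultimately have "q powr (\<gamma> + 1/2) * q powr (\<gamma> + 1/2) * (2 * q) \<le> a powr (\<gamma> + 1/2) * b powr (\<gamma> + 1/2) * (a + b)"
      using a b q by (intro mult_mono) (auto simp: q_def)
    moreover have "q powr (\<gamma> + 1/2) * q powr (\<gamma> + 1/2) * (2 * q) = 2 * q powr (2 * \<gamma> + 2)"
    proof -
      have "q powr (2 * \<gamma> + 2) = q powr ((\<gamma> + 1/2) + (\<gamma> + 1/2) + 1)"
        by (rule arg_cong[where f="\<lambda>x. q powr x"]) simp
      also have "\<dots> = q powr (\<gamma> + 1/2) * q powr (\<gamma> + 1/2) * q" using q by (simp only: powr_add powr_one)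
      finally show ?thesis by simp
    qed
    ultimately show ?thesis by simp
  qed
  have dpos: "0 < 2 * q powr (2 * \<gamma> + 2)" using q by simp
  have "\<bar>termf \<gamma> a b Sa Sb Sab\<bar> = 2 * b * \<bar>a * (a + b) * Sb + b * (a + b) * Sa - a * b * Sab\<bar> /
      (a powr (\<gamma> + 1/2) * b powr (\<gamma> + 1/2) * (a + b))"
    unfolding termf_def using a0 by (simp add: abs_mult abs_divide)
  also have "\<dots> \<le> 2 * m * (5 * m^2 * B) / (2 * q powr (2 * \<gamma> + 2))"
  proof (rule frac_le)
    show "0 \<le> 2 * m * (5 * m^2 * B)" using m B0 by simp
    show "2 * b * \<bar>a * (a + b) * Sb + b * (a + b) * Sa - a * b * Sab\<bar> \<le> 2 * m * (5 * m^2 * B)"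
      using num b a0 by (intro mult_mono) auto
  qed (use den dpos in auto)
  also have "\<dots> = 5 * (m powr 3 / q powr (2 * \<gamma> + 2)) * B"
  proof -
    have "m powr 3 = m ^ 3" using m by simp
    then show ?thesis by (simp add: power2_eq_square power3_eq_cube)
  qed
  also have "m powr 3 / q powr (2 * \<gamma> + 2) = c powr (2 * \<gamma> + 2) * m powr (1 - 2 * \<gamma>)"
  proof -
    have qf: "q powr (2 * \<gamma> + 2) = m powr (2 * \<gamma> + 2) / c powr (2 * \<gamma> + 2)"
      unfolding q_def using m c by (simp add: powr_divide)
    have mf: "m powr 3 / m powr (2 * \<gamma> + 2) = m powr (1 - 2 * \<gamma>)"
    proof -
      have "m powr 3 / m powr (2 * \<gamma> + 2) = m powr (3 - (2 * \<gamma> + 2))" using m by (simp only: powr_diff)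
      also have "\<dots> = m powr (1 - 2 * \<gamma>)" by (rule arg_cong[where f="\<lambda>x. m powr x"]) simp
      finally show ?thesis .
    qed
    have gen: "\<And>x y z::real. y \<noteq> 0 \<Longrightarrow> z \<noteq> 0 \<Longrightarrow> x / (y/z) = z * (x / y)"
      by (simp add: field_simps)
    have "m powr 3 / q powr (2 * \<gamma> + 2) = m powr 3 / (m powr (2 * \<gamma> + 2) / c powr (2 * \<gamma> + 2))"
      by (simp only: qf)
    also have "\<dots> = c powr (2 * \<gamma> + 2) * (m powr 3 / m powr (2 * \<gamma> + 2))"
      by (rule gen) (use m c in auto)
    also have "\<dots> = c powr (2 * \<gamma> + 2) * m powr (1 - 2 * \<gamma>)" by (simp only: mf)
    finally show ?thesis .
  qed
  also have "5 * (c powr (2 * \<gamma> + 2) * m powr (1 - 2 * \<gamma>)) * B \<le> 5 * (c ^ 4 * m powr (1 - 2 * \<gamma>)) * B"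
  proof -
    have "c powr (2 * \<gamma> + 2) \<le> c powr 4" using c g by (intro powr_mono) auto
    also have "c powr 4 = c ^ 4" using c by (simp add: powr_numeral)
    finally show ?thesis using B0 by (intro mult_mono mult_right_mono) auto
  qed
  finally show ?thesis by (simp add: algebra_simps)
qed

lemma alg_aux:
  fixes b P l L k A C :: real
  assumes "0 < b" "0 < P" "0 < l" "0 < L"
  shows "2 * b * (l * b * ((1 + l) * b) * (k * P) + b * ((1 + l) * b) * (k * (A * P))
       - l * b * b * (k * (C * P))) / (L * (b * P) * ((1 + l) * b))
    = 2 * k * b * ((1 + l) * (l + A) - l * C) / (L * (1 + l))"
proof -
  have e1: "2 * b * (l * b * ((1 + l) * b) * (k * P) + b * ((1 + l) * b) * (k * (A * P))
       - l * b * b * (k * (C * P))) = (b*b*P) * (2 * k * b * ((1 + l) * (l + A) - l * C))"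
    by (simp add: algebra_simps)
  have e2: "L * (b * P) * ((1 + l) * b) = (b*b*P) * (L * (1 + l))" by (simp add: algebra_simps)
  have "b*b*P \<noteq> 0" using assms by simp
  then show ?thesis unfolding e1 e2 by (rule mult_divide_mult_cancel_left)
qed

lemma alg_aux2:
  fixes b l G k A C :: real
  assumes "0 < l" "0 < G"
  shows "2 * k * b * ((1 + l) * (l + l * A) - l * ((1 + l) * C)) / (l * G * (1 + l)) = 2 * k * b * ((1 + A - C) / G)"
proof -
  have e1: "2 * k * b * ((1 + l) * (l + l * A) - l * ((1 + l) * C)) = (l * (1+l)) * (2 * k * b * (1 + A - C))"
    by (simp add: algebra_simps)
  have e2: "l * G * (1 + l) = (l * (1+l)) * G" by (simp add: algebra_simps)
  have "l * (1+l) \<noteq> 0" using assms by simp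
  then show ?thesis unfolding e1 e2 by (subst mult_divide_mult_cancel_left) auto
qed

lemma termf_ideal:
  assumes a: "0 < a" and b: "0 < b"
  shows "termf \<gamma> a b (k * a powr (2*\<gamma>)) (k * b powr (2*\<gamma>)) (k * (a+b) powr (2*\<gamma>)) = 2 * k * b * gfun \<gamma> (a / b)"
proof -
  define l where "l = a / b"
  have l: "0 < l" using a b by (simp add: l_def)
  have al: "a = l * b" using b by (simp add: l_def)
  have ab: "a + b = (1 + l) * b" using al by (simp add: algebra_simps)
  define P where "P = b powr (2*\<gamma>)"
  have P: "0 < P" using b by (simp add: P_def)
  have pa: "a powr x = l powr x * b powr x" for x using al l b by (simp add: powr_mult)
  have pab: "(a+b) powr x = (1+l) powr x * b powr x" for x using ab l b by (simp add: powr_mult)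
  have bb: "b powr (\<gamma> + 1/2) * b powr (\<gamma> + 1/2) = b * P"
    unfolding P_def using b by (simp add: powr_add[symmetric]) (simp add: powr_add)
  have ll: "l powr (2*\<gamma>) = l * l powr (2*\<gamma> - 1)" using l by (simp add: powr_diff)
  have l1: "(1+l) powr (2*\<gamma>) = (1+l) * (1+l) powr (2*\<gamma> - 1)" using l by (simp add: powr_diff)
  have lg: "l powr (\<gamma> + 1/2) = l * l powr (\<gamma> - 1/2)"
  proof -
    have "l powr (\<gamma> + 1/2) = l powr ((\<gamma> - 1/2) + 1)"
      by (rule arg_cong[where f="\<lambda>x. l powr x"]) simp
    also have "\<dots> = l * l powr (\<gamma> - 1/2)" using l by (simp only: powr_add powr_one mult.commute)
    finally show ?thesis .
  qed
  have "termf \<gamma> a b (k * a powr (2*\<gamma>)) (k * b powr (2*\<gamma>)) (k * (a+b) powr (2*\<gamma>)) =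
     2 * b * (l * b * ((1 + l) * b) * (k * P) + b * ((1 + l) * b) * (k * (l powr (2*\<gamma>) * P))
       - l * b * b * (k * ((1+l) powr (2*\<gamma>) * P))) / (l powr (\<gamma> + 1/2) * (b * P) * ((1 + l) * b))"
    unfolding termf_def pa pab ab[symmetric] P_def[symmetric]
    by (simp add: al[symmetric] ab[symmetric] bb[symmetric] mult.assoc mult.left_commute)
  also have "\<dots> = 2 * k * b * ((1 + l) * (l + l powr (2*\<gamma>)) - l * (1+l) powr (2*\<gamma>)) / (l powr (\<gamma> + 1/2) * (1 + l))"
    using b P l by (intro alg_aux) auto
  also have "\<dots> = 2 * k * b * gfun \<gamma> l"
    unfolding gfun_def ll l1 lg using l by (subst alg_aux2) auto
  finally show ?thesis by (simp add: l_def)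
qed



definition Sg :: "'a measure \<Rightarrow> (real \<Rightarrow> 'a \<Rightarrow> real) \<Rightarrow> real \<Rightarrow> real \<Rightarrow> real" where
  "Sg M X s t = (\<integral>\<omega>. (X t \<omega> - X s \<omega>)\<^sup>2 \<partial>M)"

lemma sq_identity:
  fixes a b x1 x0 xm :: real
  shows "(a * x1 + b * xm - (a + b) * x0)\<^sup>2 = a * (a+b) * (x1 - x0)\<^sup>2 + b * (a+b) * (x0 - xm)\<^sup>2 - a * b * (x1 - xm)\<^sup>2"
  by (simp add: power2_eq_square algebra_simps)

locale proc =
  fixes M :: "'a measure" and X :: "real \<Rightarrow> 'a \<Rightarrow> real" and T :: real
  assumes meas: "\<And>t. t \<in> {0..T} \<Longrightarrow> X t \<in> borel_measurable M"
    and sqi: "\<And>t. t \<in> {0..T} \<Longrightarrow> integrable M (\<lambda>\<omega>. (X t \<omega>)\<^sup>2)"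
begin

lemma int_dsq:
  assumes "s \<in> {0..T}" "t \<in> {0..T}"
  shows "integrable M (\<lambda>\<omega>. (X t \<omega> - X s \<omega>)\<^sup>2)"
proof (rule Bochner_Integration.integrable_bound)
  show "integrable M (\<lambda>\<omega>. 2 * (X t \<omega>)\<^sup>2 + 2 * (X s \<omega>)\<^sup>2)"
    using sqi assms by auto
  show "(\<lambda>\<omega>. (X t \<omega> - X s \<omega>)\<^sup>2) \<in> borel_measurable M" using meas assms by measurable
  show "AE \<omega> in M. norm ((X t \<omega> - X s \<omega>)\<^sup>2) \<le> norm (2 * (X t \<omega>)\<^sup>2 + 2 * (X s \<omega>)\<^sup>2)"
  proof (rule AE_I2)
    fix \<omega>
    have "(X t \<omega> - X s \<omega>)\<^sup>2 \<le> 2 * (X t \<omega>)\<^sup>2 + 2 * (X s \<omega>)\<^sup>2"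
      using zero_le_square[of "X t \<omega> + X s \<omega>"] by (simp add: power2_eq_square algebra_simps)
    then show "norm ((X t \<omega> - X s \<omega>)\<^sup>2) \<le> norm (2 * (X t \<omega>)\<^sup>2 + 2 * (X s \<omega>)\<^sup>2)" by simp
  qed
qed

lemma Sg_nonneg: "Sg M X s t \<ge> 0"
  unfolding Sg_def by (rule integral_nonneg_AE) auto

lemma sigma_Sg: "(sigmaX M X s t)\<^sup>2 = Sg M X s t"
  unfolding sigmaX_def Sg_def[symmetric] using Sg_nonneg by simp

lemma Sg_tri:
  assumes "0 \<le> s" "s \<le> T" "0 \<le> t" "t \<le> T"
  shows "Sg M X s t \<le> 2 * Sg M X 0 s + 2 * Sg M X 0 t"
proof -
  have "Sg M X s t \<le> (\<integral>\<omega>. 2 * (X s \<omega> - X 0 \<omega>)\<^sup>2 + 2 * (X t \<omega> - X 0 \<omega>)\<^sup>2 \<partial>M)"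
    unfolding Sg_def
  proof (rule integral_mono)
    show "integrable M (\<lambda>\<omega>. (X t \<omega> - X s \<omega>)\<^sup>2)" using int_dsq assms by auto
    show "integrable M (\<lambda>\<omega>. 2 * (X s \<omega> - X 0 \<omega>)\<^sup>2 + 2 * (X t \<omega> - X 0 \<omega>)\<^sup>2)"
      using int_dsq assms by auto
    fix \<omega>
    show "(X t \<omega> - X s \<omega>)\<^sup>2 \<le> 2 * (X s \<omega> - X 0 \<omega>)\<^sup>2 + 2 * (X t \<omega> - X 0 \<omega>)\<^sup>2"
      using zero_le_square[of "X t \<omega> + X s \<omega> - 2 * X 0 \<omega>"] by (simp add: power2_eq_square algebra_simps)
  qed
  also have "\<dots> = 2 * Sg M X 0 s + 2 * Sg M X 0 t"
    unfolding Sg_def using int_dsq assms by simp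
  finally show ?thesis .
qed

lemma E_V2:
  assumes rng: "\<And>k. k \<le> N n \<Longrightarrow> tp n k \<in> {0..T}"
  shows "(\<integral>\<omega>. V2 \<gamma> N tp (\<lambda>s. X s \<omega>) n \<partial>M) =
    (\<Sum>k=1..N n - 1. termf \<gamma> (Dt tp n k) (Dt tp n (k+1))
        (Sg M X (tp n (k-1)) (tp n k)) (Sg M X (tp n k) (tp n (k+1))) (Sg M X (tp n (k-1)) (tp n (k+1))))"
proof -
  define a where "a k = Dt tp n k" for k
  define den where "den k = a k powr (\<gamma> + 1/2) * a (k + 1) powr (\<gamma> + 1/2) * (a k + a (k + 1))" for k
  define F where "F k \<omega> = a (k+1) / den k * (a k * (a k + a (k+1)) * (X (tp n (k+1)) \<omega> - X (tp n k) \<omega>)\<^sup>2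
        + a (k+1) * (a k + a (k+1)) * (X (tp n k) \<omega> - X (tp n (k-1)) \<omega>)\<^sup>2
        - a k * a (k+1) * (X (tp n (k+1)) \<omega> - X (tp n (k-1)) \<omega>)\<^sup>2)" for k \<omega>
  have pt: "V2 \<gamma> N tp (\<lambda>s. X s \<omega>) n = 2 * (\<Sum>k=1..N n - 1. F k \<omega>)" for \<omega>
    unfolding V2_def
  proof (intro arg_cong[where f="\<lambda>x. 2 * x"] sum.cong refl)
    fix k
    show "Dt tp n (k + 1) * (D2 tp (\<lambda>s. X s \<omega>) n k)\<^sup>2 /
         (Dt tp n k powr (\<gamma> + 1 / 2) * Dt tp n (k + 1) powr (\<gamma> + 1 / 2) * (Dt tp n k + Dt tp n (k + 1))) = F k \<omega>"
      unfolding F_def D2_def a_def[symmetric] den_def[symmetric] sq_identity by simp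
  qed
  have kr: "k \<in> {1..N n - 1} \<Longrightarrow> tp n (k-1) \<in> {0..T} \<and> tp n k \<in> {0..T} \<and> tp n (k+1) \<in> {0..T}" for k
    using rng by auto
  have intF: "integrable M (F k)" if "k \<in> {1..N n - 1}" for k
    unfolding F_def using kr[OF that] int_dsq by auto
  have IF: "(\<integral>\<omega>. F k \<omega> \<partial>M) = a (k+1) / den k * (a k * (a k + a (k+1)) * Sg M X (tp n k) (tp n (k+1))
        + a (k+1) * (a k + a (k+1)) * Sg M X (tp n (k-1)) (tp n k)
        - a k * a (k+1) * Sg M X (tp n (k-1)) (tp n (k+1)))" if "k \<in> {1..N n - 1}" for k
    unfolding F_def Sg_def using kr[OF that] int_dsq by simp
  have "(\<integral>\<omega>. V2 \<gamma> N tp (\<lambda>s. X s \<omega>) n \<partial>M) = 2 * (\<Sum>k=1..N n - 1. \<integral>\<omega>. F k \<omega> \<partial>M)"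
    unfolding pt using intF by (simp add: Bochner_Integration.integral_sum)
  also have "\<dots> = (\<Sum>k=1..N n - 1. termf \<gamma> (Dt tp n k) (Dt tp n (k+1))
        (Sg M X (tp n (k-1)) (tp n k)) (Sg M X (tp n k) (tp n (k+1))) (Sg M X (tp n (k-1)) (tp n (k+1))))"
    unfolding sum_distrib_left
  proof (rule sum.cong[OF refl])
    fix k assume k: "k \<in> {1..N n - 1}"
    show "2 * (\<integral>\<omega>. F k \<omega> \<partial>M) = termf \<gamma> (Dt tp n k) (Dt tp n (k+1))
        (Sg M X (tp n (k-1)) (tp n k)) (Sg M X (tp n k) (tp n (k+1))) (Sg M X (tp n (k-1)) (tp n (k+1)))"
      unfolding IF[OF k] termf_def a_def den_def by simp
  qed
  finally show ?thesis .
qed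

end


locale main = part T N tp c + proc M X T
  for T N tp c and M :: "'a measure" and X +
  fixes \<gamma> \<kappa> :: real
  assumes g0: "0 < \<gamma>" and g1: "\<gamma> < 1" and kap: "\<kappa> > 0"
begin

definition tm where "tm n k = termf \<gamma> (Dt tp n k) (Dt tp n (k+1))
        (Sg M X (tp n (k-1)) (tp n k)) (Sg M X (tp n k) (tp n (k+1))) (Sg M X (tp n (k-1)) (tp n (k+1)))"
definition idl where "idl n k = termf \<gamma> (Dt tp n k) (Dt tp n (k+1))
        (\<kappa>\<^sup>2 * Dt tp n k powr (2*\<gamma>)) (\<kappa>\<^sup>2 * Dt tp n (k+1) powr (2*\<gamma>)) (\<kappa>\<^sup>2 * (Dt tp n k + Dt tp n (k+1)) powr (2*\<gamma>))"

lemma mcp: "mx n / c \<le> mn n"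
  using cmesh[of n] c1 by (simp add: field_simps)

lemma Dt_bounds: "1 \<le> k \<Longrightarrow> k \<le> N n \<Longrightarrow> mx n / c \<le> Dt tp n k \<and> Dt tp n k \<le> mx n"
  using mcp Dt_ge Dt_le order_trans by blast

lemma pow_le4: "0 < x \<Longrightarrow> (2 * x) powr (2*\<gamma>) \<le> 4 * x powr (2*\<gamma>)"
proof -
  assume x: "0 < x"
  have "(2 * x) powr (2*\<gamma>) = 2 powr (2*\<gamma>) * x powr (2*\<gamma>)" using x by (simp add: powr_mult)
  also have "2 powr (2*\<gamma>) \<le> 2 powr 2" using g1 by (intro powr_mono) auto
  then have "2 powr (2*\<gamma>) * x powr (2*\<gamma>) \<le> 4 * x powr (2*\<gamma>)" by (simp add: mult_right_mono)
  finally show ?thesis .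
qed

lemma pow_le9: "0 < x \<Longrightarrow> (3 * x) powr (2*\<gamma>) \<le> 9 * x powr (2*\<gamma>)"
proof -
  assume x: "0 < x"
  have "(3 * x) powr (2*\<gamma>) = 3 powr (2*\<gamma>) * x powr (2*\<gamma>)" using x by (simp add: powr_mult)
  also have "3 powr (2*\<gamma>) \<le> 3 powr 2" using g1 by (intro powr_mono) auto
  then have "3 powr (2*\<gamma>) * x powr (2*\<gamma>) \<le> 9 * x powr (2*\<gamma>)" by (simp add: mult_right_mono)
  finally show ?thesis .
qed

lemma bulk_term:
  assumes e: "0 < \<epsilon>"
    and C2p: "\<And>t h. 0 < h \<Longrightarrow> h < d0 \<Longrightarrow> h powr (3/4) \<le> t \<Longrightarrow> t + h \<le> T \<Longrightarrow>
        \<bar>Sg M X t (t+h) - \<kappa>\<^sup>2 * h powr (2*\<gamma>)\<bar> \<le> 3 * \<epsilon> * \<kappa>\<^sup>2 * h powr (2*\<gamma>)"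
    and md: "2 * mx n < d0"
    and k: "1 \<le> k" "k \<le> N n - 1"
    and ku: "2 * mx n powr (3/4) \<le> tp n (k-1)"
  shows "\<bar>tm n k - idl n k\<bar> \<le> 60 * c^4 * \<kappa>\<^sup>2 * \<epsilon> * mx n"
proof -
  define m where "m = mx n"
  define a where "a = Dt tp n k"
  define b where "b = Dt tp n (k+1)"
  have m: "0 < m" using mx_pos by (simp add: m_def)
  have ab: "m / c \<le> a" "a \<le> m" "m / c \<le> b" "b \<le> m"
    using Dt_bounds[of k n] Dt_bounds[of "k+1" n] k unfolding m_def a_def b_def by auto
  have a0: "0 < a" "0 < b" using Dt_pos k unfolding a_def b_def by auto
  have tk: "tp n k = tp n (k-1) + a" "tp n (k+1) = tp n k + b" "tp n (k+1) = tp n (k-1) + (a + b)"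
    unfolding a_def b_def Dt_def using k by auto
  have tT: "tp n (k+1) \<le> T" using tp_range[of "k+1" n] k by auto
  have tmono: "tp n (k-1) \<le> tp n k" using a0 tk by simp
  have p34: "h powr (3/4) \<le> tp n (k-1)" if "0 < h" "h \<le> 2 * m" for h
  proof -
    have "h powr (3/4) \<le> (2 * m) powr (3/4)" using that by (intro powr_mono2) auto
    also have "\<dots> = 2 powr (3/4) * m powr (3/4)" using m by (simp add: powr_mult)
    also have "\<dots> \<le> 2 * m powr (3/4)"
    proof -
      have "2 powr (3/4) \<le> (2::real) powr 1" by (intro powr_mono) auto
      then show ?thesis by (simp add: mult_right_mono)
    qed
    finally show ?thesis using ku m_def by simp
  qed
  have hb: "\<bar>Sg M X t (t+h) - \<kappa>\<^sup>2 * h powr (2*\<gamma>)\<bar> \<le> 12 * \<epsilon> * \<kappa>\<^sup>2 * m powr (2*\<gamma>)"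
    if "0 < h" "h \<le> 2 * m" "tp n (k-1) \<le> t" "t + h \<le> T" for t h
  proof -
    have "\<bar>Sg M X t (t+h) - \<kappa>\<^sup>2 * h powr (2*\<gamma>)\<bar> \<le> 3 * \<epsilon> * \<kappa>\<^sup>2 * h powr (2*\<gamma>)"
      using that p34[OF that(1,2)] md m_def by (intro C2p) auto
    also have "h powr (2*\<gamma>) \<le> (2 * m) powr (2*\<gamma>)" using that g0 by (intro powr_mono2) auto
    then have "3 * \<epsilon> * \<kappa>\<^sup>2 * h powr (2*\<gamma>) \<le> 3 * \<epsilon> * \<kappa>\<^sup>2 * (4 * m powr (2*\<gamma>))"
      using pow_le4[OF m] e by (intro mult_left_mono) auto
    finally show ?thesis by simp
  qed
  have B1: "\<bar>Sg M X (tp n (k-1)) (tp n k) - \<kappa>\<^sup>2 * a powr (2*\<gamma>)\<bar> \<le> 12 * \<epsilon> * \<kappa>\<^sup>2 * m powr (2*\<gamma>)"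
    using hb[of a "tp n (k-1)"] a0 ab tk tT by auto
  have B2: "\<bar>Sg M X (tp n k) (tp n (k+1)) - \<kappa>\<^sup>2 * b powr (2*\<gamma>)\<bar> \<le> 12 * \<epsilon> * \<kappa>\<^sup>2 * m powr (2*\<gamma>)"
    using hb[of b "tp n k"] a0 ab tk tT tmono by auto
  have B3: "\<bar>Sg M X (tp n (k-1)) (tp n (k+1)) - \<kappa>\<^sup>2 * (a+b) powr (2*\<gamma>)\<bar> \<le> 12 * \<epsilon> * \<kappa>\<^sup>2 * m powr (2*\<gamma>)"
  proof -
    have "tp n (k-1) + (a+b) \<le> T" using tk(3) tT by simp
    then have "\<bar>Sg M X (tp n (k-1)) (tp n (k-1) + (a+b)) - \<kappa>\<^sup>2 * (a+b) powr (2*\<gamma>)\<bar> \<le> 12 * \<epsilon> * \<kappa>\<^sup>2 * m powr (2*\<gamma>)"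
      using a0 ab by (intro hb) auto
    then show ?thesis unfolding tk(3) .
  qed
  have "\<bar>tm n k - idl n k\<bar> = \<bar>termf \<gamma> a b (Sg M X (tp n (k-1)) (tp n k) - \<kappa>\<^sup>2 * a powr (2*\<gamma>))
       (Sg M X (tp n k) (tp n (k+1)) - \<kappa>\<^sup>2 * b powr (2*\<gamma>)) (Sg M X (tp n (k-1)) (tp n (k+1)) - \<kappa>\<^sup>2 * (a+b) powr (2*\<gamma>))\<bar>"
    unfolding tm_def idl_def a_def[symmetric] b_def[symmetric] termf_diff ..
  also have "\<dots> \<le> 5 * c ^ 4 * m powr (1 - 2 * \<gamma>) * (12 * \<epsilon> * \<kappa>\<^sup>2 * m powr (2*\<gamma>))"
    by (rule termf_bound[OF g0 g1 c1 m ab B1 B2 B3])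
  also have "\<dots> = 60 * c^4 * \<kappa>\<^sup>2 * \<epsilon> * (m powr (1 - 2 * \<gamma>) * m powr (2*\<gamma>))" by (simp add: algebra_simps)
  also have "m powr (1 - 2 * \<gamma>) * m powr (2*\<gamma>) = m" using m by (simp add: powr_add[symmetric])
  finally show ?thesis by (simp add: m_def)
qed

lemma m_le_u: "mx n \<le> 1 \<Longrightarrow> mx n \<le> mx n powr (3/4)"
proof -
  assume "mx n \<le> 1"
  then have "mx n powr 1 \<le> mx n powr (3/4)" using mx_pos[of n] by (intro powr_mono') auto
  then show ?thesis using mx_pos[of n] by simp
qed

lemma near_term:
  assumes C1p: "\<And>x. 0 < x \<Longrightarrow> x < b1 \<Longrightarrow> Sg M X 0 x \<le> C\<^sup>2 * x powr (2*\<gamma>)"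
    and m1: "mx n \<le> 1" and ub: "3 * (2 * mx n powr (3/4)) < b1"
    and k: "1 \<le> k" "k \<le> N n - 1"
    and ku: "tp n (k-1) < 2 * mx n powr (3/4)"
  shows "\<bar>tm n k - idl n k\<bar> \<le> 5 * c ^ 4 * mx n powr (1 - 2 * \<gamma>) * ((36 * C\<^sup>2 + 4 * \<kappa>\<^sup>2) * (2 * mx n powr (3/4)) powr (2*\<gamma>))"
proof -
  define m where "m = mx n"
  define u where "u = 2 * mx n powr (3/4)"
  define a where "a = Dt tp n k"
  define b where "b = Dt tp n (k+1)"
  have m: "0 < m" using mx_pos by (simp add: m_def)
  have mu: "m \<le> u" using m_le_u[OF m1] m unfolding m_def u_def by simp
  have u: "0 < u" using m mu by simp
  have ab: "m / c \<le> a" "a \<le> m" "m / c \<le> b" "b \<le> m"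
    using Dt_bounds[of k n] Dt_bounds[of "k+1" n] k unfolding m_def a_def b_def by auto
  have a0: "0 < a" "0 < b" using Dt_pos k unfolding a_def b_def by auto
  have tk: "tp n k = tp n (k-1) + a" "tp n (k+1) = tp n k + b"
    unfolding a_def b_def Dt_def using k by auto
  have t0: "0 \<le> tp n (k-1)" using tp_range[of "k-1" n] k by auto
  have tT: "tp n (k+1) \<le> T" using tp_range[of "k+1" n] k by auto
  have pts: "tp n (k-1) \<le> 3 * u" "tp n k \<le> 3 * u" "tp n (k+1) \<le> 3 * u"
    using tk ku ab mu u_def a0 by auto
  have S0: "Sg M X 0 x \<le> 9 * C\<^sup>2 * u powr (2*\<gamma>)" if "0 \<le> x" "x \<le> 3 * u" for x
  proof (cases "x = 0")
    case True
    then have "Sg M X 0 x = 0" unfolding Sg_def by simp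
    then show ?thesis by simp
  next
    case False
    then have "Sg M X 0 x \<le> C\<^sup>2 * x powr (2*\<gamma>)" using that ub u_def by (intro C1p) auto
    also have "\<dots> \<le> C\<^sup>2 * (3 * u) powr (2*\<gamma>)" using that g0 by (intro mult_left_mono powr_mono2) auto
    also have "\<dots> \<le> C\<^sup>2 * (9 * u powr (2*\<gamma>))" using pow_le9[OF u] by (intro mult_left_mono) auto
    finally show ?thesis by simp
  qed
  have Sb: "\<bar>Sg M X s t\<bar> \<le> 36 * C\<^sup>2 * u powr (2*\<gamma>)" if "0 \<le> s" "s \<le> 3 * u" "0 \<le> t" "t \<le> 3 * u" "s \<le> T" "t \<le> T" for s t
  proof -
    have "\<bar>Sg M X s t\<bar> = Sg M X s t" using Sg_nonneg by simp
    also have "\<dots> \<le> 2 * Sg M X 0 s + 2 * Sg M X 0 t" using that by (intro Sg_tri) auto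
    also have "\<dots> \<le> 36 * C\<^sup>2 * u powr (2*\<gamma>)" using S0[of s] S0[of t] that by simp
    finally show ?thesis .
  qed
  have tmono: "tp n (k-1) \<le> tp n k" "tp n k \<le> tp n (k+1)" using a0 tk by auto
  have tmb: "\<bar>tm n k\<bar> \<le> 5 * c ^ 4 * m powr (1 - 2 * \<gamma>) * (36 * C\<^sup>2 * u powr (2*\<gamma>))"
    unfolding tm_def a_def[symmetric] b_def[symmetric]
    by (rule termf_bound[OF g0 g1 c1 m ab]) (use Sb pts t0 tmono tT in auto)
  have i1: "\<bar>\<kappa>\<^sup>2 * x powr (2*\<gamma>)\<bar> \<le> 4 * \<kappa>\<^sup>2 * u powr (2*\<gamma>)" if "0 < x" "x \<le> 2 * u" for x
  proof -
    have "\<bar>\<kappa>\<^sup>2 * x powr (2*\<gamma>)\<bar> = \<kappa>\<^sup>2 * x powr (2*\<gamma>)" by simp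
    also have "\<dots> \<le> \<kappa>\<^sup>2 * (2 * u) powr (2*\<gamma>)" using that g0 by (intro mult_left_mono powr_mono2) auto
    also have "\<dots> \<le> \<kappa>\<^sup>2 * (4 * u powr (2*\<gamma>))" using pow_le4[OF u] by (intro mult_left_mono) auto
    finally show ?thesis by simp
  qed
  have idb: "\<bar>idl n k\<bar> \<le> 5 * c ^ 4 * m powr (1 - 2 * \<gamma>) * (4 * \<kappa>\<^sup>2 * u powr (2*\<gamma>))"
    unfolding idl_def a_def[symmetric] b_def[symmetric]
    by (rule termf_bound[OF g0 g1 c1 m ab]) (use i1 a0 ab mu in auto)
  have "\<bar>tm n k - idl n k\<bar> \<le> \<bar>tm n k\<bar> + \<bar>idl n k\<bar>" by simp
  also have "\<dots> \<le> 5 * c ^ 4 * m powr (1 - 2 * \<gamma>) * ((36 * C\<^sup>2 + 4 * \<kappa>\<^sup>2) * u powr (2*\<gamma>))"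
    using tmb idb by (simp add: algebra_simps)
  finally show ?thesis unfolding m_def u_def .
qed

lemma card_near:
  assumes m1: "mx n \<le> 1"
  shows "real (card ({1..N n - 1} \<inter> {k. tp n (k-1) < 2 * mx n powr (3/4)}))
     \<le> (c + 1) * (2 * mx n powr (3/4) / mx n)"
proof -
  define u where "u = 2 * mx n powr (3/4)"
  define p where "p = mn n"
  define m where "m = mx n"
  have p: "0 < p" using mn_pos by (simp add: p_def)
  have m: "0 < m" using mx_pos by (simp add: m_def)
  have mu: "m \<le> u" using m_le_u[OF m1] m unfolding m_def u_def by simp
  have sub: "{1..N n - 1} \<inter> {k. tp n (k-1) < u} \<subseteq> {1..nat \<lceil>u / p\<rceil>}"
  proof
    fix k assume k: "k \<in> {1..N n - 1} \<inter> {k. tp n (k-1) < u}"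
    have "real (k-1) * p \<le> tp n (k-1)" unfolding p_def using k by (intro tp_ge) auto
    then have "real (k-1) * p < u" using k by simp
    then have "real (k-1) < u / p" using p by (simp add: field_simps)
    also have "\<dots> \<le> of_int \<lceil>u / p\<rceil>" by (rule le_of_int_ceiling)
    finally have "int (k-1) < \<lceil>u / p\<rceil>" by linarith
    then show "k \<in> {1..nat \<lceil>u / p\<rceil>}" using k by auto
  qed
  have "real (card ({1..N n - 1} \<inter> {k. tp n (k-1) < u})) \<le> real (card {1..nat \<lceil>u / p\<rceil>})"
    using card_mono[OF _ sub] by simp
  also have "\<dots> = real (nat \<lceil>u / p\<rceil>)" by simp
  also have "\<dots> \<le> u / p + 1" using p mu m by (simp add: of_nat_nat)
  finally have cc: "real (card ({1..N n - 1} \<inter> {k. tp n (k-1) < u})) \<le> u / p + 1" .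
  have up: "u / p \<le> c * (u / m)"
  proof -
    have "m / c \<le> p" using mcp unfolding p_def m_def .
    moreover have "0 < m / c" using m c1 by simp
    ultimately have "u / p \<le> u / (m / c)" using m c1 mu p by (intro divide_left_mono) auto
    then show ?thesis using c1 by (simp add: field_simps)
  qed
  have "1 \<le> u / m" using mu m by simp
  moreover have "(c + 1) * (u / m) = c * (u/m) + u/m" by (simp only: distrib_right mult_1)
  ultimately have F: "real (card ({1..N n - 1} \<inter> {k. tp n (k-1) < u})) \<le> (c + 1) * (u / m)" using cc up by linarith
  then show ?thesis by (simp only: u_def m_def)
qed

lemma sum_est:
  assumes e: "0 < \<epsilon>"
    and C2p: "\<And>t h. 0 < h \<Longrightarrow> h < d0 \<Longrightarrow> h powr (3/4) \<le> t \<Longrightarrow> t + h \<le> T \<Longrightarrow>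
        \<bar>Sg M X t (t+h) - \<kappa>\<^sup>2 * h powr (2*\<gamma>)\<bar> \<le> 3 * \<epsilon> * \<kappa>\<^sup>2 * h powr (2*\<gamma>)"
    and C1p: "\<And>x. 0 < x \<Longrightarrow> x < b1 \<Longrightarrow> Sg M X 0 x \<le> C\<^sup>2 * x powr (2*\<gamma>)"
    and m1: "mx n \<le> 1" and md: "2 * mx n < d0" and ub: "3 * (2 * mx n powr (3/4)) < b1"
  shows "\<bar>\<Sum>k=1..N n - 1. tm n k - idl n k\<bar> \<le> 60 * c^5 * \<kappa>\<^sup>2 * T * \<epsilon> +
     (c + 1) * (5 * c ^ 4 * (36 * C\<^sup>2 + 4 * \<kappa>\<^sup>2)) * ((2 * mx n powr (3/4) / mx n) * mx n powr (1 - 2 * \<gamma>) * (2 * mx n powr (3/4)) powr (2*\<gamma>))"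
proof -
  define u where "u = 2 * mx n powr (3/4)"
  define Kb where "Kb = 60 * c^4 * \<kappa>\<^sup>2 * \<epsilon> * mx n"
  define Kn where "Kn = 5 * c ^ 4 * mx n powr (1 - 2 * \<gamma>) * ((36 * C\<^sup>2 + 4 * \<kappa>\<^sup>2) * u powr (2*\<gamma>))"
  have Kb0: "0 \<le> Kb" unfolding Kb_def using mx_pos[of n] e by simp
  have Kn0: "0 \<le> Kn" unfolding Kn_def by simp
  have pw: "\<bar>tm n k - idl n k\<bar> \<le> Kb + Kn * of_bool (tp n (k-1) < u)" if k: "k \<in> {1..N n - 1}" for k
  proof (cases "tp n (k-1) < u")
    case True
    then show ?thesis using near_term[OF C1p m1 ub, of k] k Kb0 unfolding Kn_def u_def by auto
  next
    case False
    then show ?thesis using bulk_term[OF e C2p md, of k] k unfolding Kb_def u_def by auto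
  qed
  have "\<bar>\<Sum>k=1..N n - 1. tm n k - idl n k\<bar> \<le> (\<Sum>k=1..N n - 1. \<bar>tm n k - idl n k\<bar>)"
    by (rule sum_abs)
  also have "\<dots> \<le> (\<Sum>k=1..N n - 1. Kb + Kn * of_bool (tp n (k-1) < u))" by (rule sum_mono) (rule pw)
  also have "\<dots> = real (N n - 1) * Kb + Kn * real (card ({1..N n - 1} \<inter> {k. tp n (k-1) < u}))"
    by (simp add: sum.distrib sum_distrib_left[symmetric])
  finally have s1: "\<bar>\<Sum>k=1..N n - 1. tm n k - idl n k\<bar> \<le> real (N n - 1) * Kb + Kn * real (card ({1..N n - 1} \<inter> {k. tp n (k-1) < u}))" .
  have s2: "real (N n - 1) * Kb \<le> 60 * c^5 * \<kappa>\<^sup>2 * T * \<epsilon>"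
  proof -
    have "real (N n - 1) * Kb \<le> real (N n) * Kb" using Kb0 by (intro mult_right_mono) auto
    also have "\<dots> = 60 * c^4 * \<kappa>\<^sup>2 * \<epsilon> * (real (N n) * mx n)" unfolding Kb_def by (simp add: algebra_simps)
    also have "\<dots> \<le> 60 * c^4 * \<kappa>\<^sup>2 * \<epsilon> * (c * T)" using N_mx e c1 by (intro mult_left_mono) auto
    finally have "real (N n - 1) * Kb \<le> 60 * c^4 * \<kappa>\<^sup>2 * \<epsilon> * (c * T)" .
    moreover have c5: "c^5 = c * c^4" by (simp add: numeral_eq_Suc)
    ultimately show ?thesis by (simp add: c5 algebra_simps)
  qed
  have s3: "Kn * real (card ({1..N n - 1} \<inter> {k. tp n (k-1) < u})) \<le> Kn * ((c + 1) * (u / mx n))"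
    using card_near[OF m1] Kn0 unfolding u_def by (intro mult_left_mono) auto
  from s1 s2 s3 have fin: "\<bar>\<Sum>k=1..N n - 1. tm n k - idl n k\<bar> \<le> 60 * c^5 * \<kappa>\<^sup>2 * T * \<epsilon> + Kn * ((c + 1) * (u / mx n))"
    by linarith
  have "Kn * ((c + 1) * (u / mx n)) = (c + 1) * (5 * c ^ 4 * (36 * C\<^sup>2 + 4 * \<kappa>\<^sup>2)) * ((u / mx n) * mx n powr (1 - 2 * \<gamma>) * u powr (2*\<gamma>))"
    unfolding Kn_def by (simp only: ac_simps)
  with fin show ?thesis unfolding u_def[symmetric] by linarith
qed

end


lemma Psi34: "(\<lambda>h::real. h powr (3/4)) \<in> Psi T"
  unfolding Psi_def
proof (intro CollectI conjI ballI)
  show "continuous_on {0<..T} (\<lambda>h::real. h powr (3/4))" by (intro continuous_intros) auto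
  show "((\<lambda>h::real. h powr (3/4)) \<longlongrightarrow> 0) (at_right 0)" by real_asymp
  show "filterlim (\<lambda>h::real. h powr (3/4) / h) at_top (at_right 0)" by real_asymp
  show "((\<lambda>h::real. h * (h powr (3/4) / h) ^ 3) \<longlongrightarrow> 0) (at_right 0)" by real_asymp
qed auto

context main begin

lemma sq_ratio:
  fixes s q \<epsilon> :: real
  assumes q: "0 < q" and r: "\<bar>s / q - 1\<bar> \<le> \<epsilon>" and e: "\<epsilon> \<le> 1"
  shows "\<bar>s\<^sup>2 - q\<^sup>2\<bar> \<le> 3 * \<epsilon> * q\<^sup>2"
proof -
  define r where "r = s / q"
  have s: "s = r * q" using q by (auto simp: r_def field_simps)
  have "s\<^sup>2 - q\<^sup>2 = q\<^sup>2 * ((r - 1) * (r + 1))"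
    unfolding s by (simp add: power2_eq_square algebra_simps)
  then have "\<bar>s\<^sup>2 - q\<^sup>2\<bar> = q\<^sup>2 * (\<bar>r - 1\<bar> * \<bar>r + 1\<bar>)"
    by (simp add: abs_mult)
  also have "\<bar>r + 1\<bar> \<le> 3" using r e r_def by linarith
  then have "\<bar>r - 1\<bar> * \<bar>r + 1\<bar> \<le> \<epsilon> * 3" using r r_def by (intro mult_mono) auto
  then have "q\<^sup>2 * (\<bar>r - 1\<bar> * \<bar>r + 1\<bar>) \<le> q\<^sup>2 * (\<epsilon> * 3)" by (intro mult_left_mono) auto
  finally show ?thesis by (simp add: algebra_simps)
qed

lemma C2_ext:
  assumes C2: "cond_C2 M X T \<gamma> \<kappa>" and e: "0 < \<epsilon>" "\<epsilon> \<le> 1"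
  shows "\<exists>d0>0. \<forall>t h. 0 < h \<longrightarrow> h < d0 \<longrightarrow> h powr (3/4) \<le> t \<longrightarrow> t + h \<le> T \<longrightarrow>
        \<bar>Sg M X t (t+h) - \<kappa>\<^sup>2 * h powr (2*\<gamma>)\<bar> \<le> 3 * \<epsilon> * \<kappa>\<^sup>2 * h powr (2*\<gamma>)"
proof -
  have "\<forall>\<^sub>F \<delta> in at_right 0. \<forall>t h. \<delta> powr (3/4) \<le> t \<and> t \<le> T - \<delta> \<and> 0 < h \<and> h \<le> \<delta> \<longrightarrow>
        \<bar>sigmaX M X t (t + h) / (\<kappa> * h powr \<gamma>) - 1\<bar> \<le> \<epsilon>"
  proof -
    have "\<forall>\<phi>\<in>Psi T. \<forall>\<epsilon>>0. \<forall>\<^sub>F \<delta> in at_right 0.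
      \<forall>t h. \<phi> \<delta> \<le> t \<and> t \<le> T - \<delta> \<and> 0 < h \<and> h \<le> \<delta> \<longrightarrow>
        \<bar>sigmaX M X t (t + h) / (\<kappa> * h powr \<gamma>) - 1\<bar> \<le> \<epsilon>" using C2 unfolding cond_C2_def .
    from bspec[OF this Psi34[of T]] e(1) show ?thesis by blast
  qed
  then obtain d0 where d0: "d0 > 0" and P: "\<And>y. 0 < y \<Longrightarrow> y < d0 \<Longrightarrow> \<forall>t h. y powr (3/4) \<le> t \<and> t \<le> T - y \<and> 0 < h \<and> h \<le> y \<longrightarrow>
        \<bar>sigmaX M X t (t + h) / (\<kappa> * h powr \<gamma>) - 1\<bar> \<le> \<epsilon>"
    unfolding eventually_at_right_field by auto
  show ?thesis
  proof (intro exI[of _ d0] conjI allI impI)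
    fix t h assume h: "0 < h" "h < d0" "h powr (3/4) \<le> t" "t + h \<le> T"
    have r: "\<bar>sigmaX M X t (t + h) / (\<kappa> * h powr \<gamma>) - 1\<bar> \<le> \<epsilon>" using P[OF h(1,2)] h by auto
    have q: "0 < \<kappa> * h powr \<gamma>" using kap h by simp
    have "\<bar>(sigmaX M X t (t + h))\<^sup>2 - (\<kappa> * h powr \<gamma>)\<^sup>2\<bar> \<le> 3 * \<epsilon> * (\<kappa> * h powr \<gamma>)\<^sup>2"
      by (rule sq_ratio[OF q r e(2)])
    moreover have "(\<kappa> * h powr \<gamma>)\<^sup>2 = \<kappa>\<^sup>2 * h powr (2*\<gamma>)"
      using h by (simp add: power_mult_distrib power2_eq_square powr_add[symmetric])
    ultimately show "\<bar>Sg M X t (t+h) - \<kappa>\<^sup>2 * h powr (2*\<gamma>)\<bar> \<le> 3 * \<epsilon> * \<kappa>\<^sup>2 * h powr (2*\<gamma>)"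
      unfolding sigma_Sg by (simp add: mult.assoc)
  qed (use d0 in auto)
qed

lemma C1_ext:
  assumes C1: "cond_C1 M X \<gamma>"
  shows "\<exists>b1>0. \<exists>C. \<forall>x. 0 < x \<longrightarrow> x < b1 \<longrightarrow> Sg M X 0 x \<le> C\<^sup>2 * x powr (2*\<gamma>)"
proof -
  obtain C where C: "C > 0" and ev: "\<forall>\<^sub>F x in at_right 0. norm (sigmaX M X 0 x) \<le> C * norm (x powr \<gamma>)"
    using C1 unfolding cond_C1_def by (elim landau_o.bigE) auto
  then obtain b1 where b1: "b1 > 0" and P: "\<And>y. 0 < y \<Longrightarrow> y < b1 \<Longrightarrow> norm (sigmaX M X 0 y) \<le> C * norm (y powr \<gamma>)"
    unfolding eventually_at_right_field by auto
  show ?thesis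
  proof (rule exI[of _ b1], intro conjI exI[of _ C] allI impI)
    fix x :: real assume x: "0 < x" "x < b1"
    have "\<bar>sigmaX M X 0 x\<bar> \<le> C * x powr \<gamma>" using P[OF x] by simp
    then have "(sigmaX M X 0 x)\<^sup>2 \<le> (C * x powr \<gamma>)\<^sup>2"
      by (metis abs_ge_zero order_trans power2_abs power_mono)
    also have "(C * x powr \<gamma>)\<^sup>2 = C\<^sup>2 * x powr (2*\<gamma>)"
      using x by (simp add: power_mult_distrib power2_eq_square powr_add[symmetric])
    finally show "Sg M X 0 x \<le> C\<^sup>2 * x powr (2*\<gamma>)" unfolding sigma_Sg .
  qed (use b1 in auto)
qed

lemma Z_eq:
  assumes m: "0 < m"
  shows "(2 * m powr (3/4) / m) * m powr (1 - 2 * \<gamma>) * (2 * m powr (3/4)) powr (2*\<gamma>)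
       = 2 * 2 powr (2*\<gamma>) * m powr (3/4 - \<gamma>/2)"
proof -
  have a: "(2 * m powr (3/4)) powr (2*\<gamma>) = 2 powr (2*\<gamma>) * m powr (3/4 * (2*\<gamma>))"
    using m by (simp add: powr_mult powr_powr)
  have b: "2 * m powr (3/4) / m = 2 * m powr (3/4 - 1)"
  proof -
    have "m powr (3/4 - 1) = m powr (3/4) / m powr 1" by (rule powr_diff)
    then show ?thesis using m by simp
  qed
  have "(2 * m powr (3/4) / m) * m powr (1 - 2 * \<gamma>) * (2 * m powr (3/4)) powr (2*\<gamma>)
      = 2 * m powr (3/4 - 1) * m powr (1 - 2 * \<gamma>) * (2 powr (2*\<gamma>) * m powr (3/4 * (2*\<gamma>)))"
    by (simp only: a b)
  also have "\<dots> = 2 * 2 powr (2*\<gamma>) * (m powr (3/4 - 1) * m powr (1 - 2 * \<gamma>) * m powr (3/4 * (2*\<gamma>)))"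
    by (simp only: mult_ac)
  also have "m powr (3/4 - 1) * m powr (1 - 2 * \<gamma>) * m powr (3/4 * (2*\<gamma>)) = m powr ((3/4 - 1) + (1 - 2 * \<gamma>) + 3/4 * (2*\<gamma>))"
    by (simp only: powr_add)
  also have "(3/4 - 1) + (1 - 2 * \<gamma>) + 3/4 * (2*\<gamma>) = 3/4 - \<gamma>/2" by simp
  finally show ?thesis .
qed

lemma main_lim:
  assumes C1: "cond_C1 M X \<gamma>" and C2: "cond_C2 M X T \<gamma> \<kappa>"
  shows "(\<lambda>n. \<Sum>k=1..N n - 1. tm n k - idl n k) \<longlonglongrightarrow> 0"
proof (rule tendstoI)
  fix e :: real assume e: "e > 0"
  define A where "A = 60 * c^5 * \<kappa>\<^sup>2 * T"
  have A: "A > 0" unfolding A_def using c1 kap T_pos by simp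
  define \<epsilon> where "\<epsilon> = min 1 (e / (2 * A))"
  have eps: "0 < \<epsilon>" "\<epsilon> \<le> 1" "A * \<epsilon> \<le> e / 2"
  proof -
    show "0 < \<epsilon>" "\<epsilon> \<le> 1" unfolding \<epsilon>_def using e A by auto
    have "\<epsilon> \<le> e / (2 * A)" unfolding \<epsilon>_def by simp
    then have "A * \<epsilon> \<le> A * (e / (2 * A))" using A by (intro mult_left_mono) auto
    also have "\<dots> = e / 2" using A by simp
    finally show "A * \<epsilon> \<le> e / 2" .
  qed
  obtain d0 where d0: "d0 > 0" and C2p: "\<And>t h. 0 < h \<Longrightarrow> h < d0 \<Longrightarrow> h powr (3/4) \<le> t \<Longrightarrow> t + h \<le> T \<Longrightarrow>
        \<bar>Sg M X t (t+h) - \<kappa>\<^sup>2 * h powr (2*\<gamma>)\<bar> \<le> 3 * \<epsilon> * \<kappa>\<^sup>2 * h powr (2*\<gamma>)"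
    using C2_ext[OF C2 eps(1,2)] by blast
  obtain b1 C where b1: "b1 > 0" and C1p: "\<And>x. 0 < x \<Longrightarrow> x < b1 \<Longrightarrow> Sg M X 0 x \<le> C\<^sup>2 * x powr (2*\<gamma>)"
    using C1_ext[OF C1] by blast
  define K where "K = (c + 1) * (5 * c ^ 4 * (36 * C\<^sup>2 + 4 * \<kappa>\<^sup>2)) * (2 * 2 powr (2*\<gamma>))"
  have mx0: "\<forall>\<^sub>F n in sequentially. 0 \<le> mx n" using mx_pos by (simp add: less_imp_le)
  have u0: "(\<lambda>n. 2 * mx n powr (3/4)) \<longlonglongrightarrow> 0"
    using tendsto_mult[OF tendsto_const[of 2] tendsto_zero_powrI[OF mx_lim tendsto_const mx0, of "3/4"]] by simp
  have z0: "(\<lambda>n. K * mx n powr (3/4 - \<gamma>/2)) \<longlonglongrightarrow> 0"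
    using tendsto_mult[OF tendsto_const[of K] tendsto_zero_powrI[OF mx_lim tendsto_const mx0, of "3/4 - \<gamma>/2"]] g1 by simp
  have ev1: "\<forall>\<^sub>F n in sequentially. mx n < 1" using order_tendstoD(2)[OF mx_lim, of 1] by simp
  have ev2: "\<forall>\<^sub>F n in sequentially. mx n < d0 / 2" using order_tendstoD(2)[OF mx_lim, of "d0/2"] d0 by simp
  have ev3: "\<forall>\<^sub>F n in sequentially. 2 * mx n powr (3/4) < b1 / 3" using order_tendstoD(2)[OF u0, of "b1/3"] b1 by simp
  have ev4: "\<forall>\<^sub>F n in sequentially. K * mx n powr (3/4 - \<gamma>/2) < e / 2" using order_tendstoD(2)[OF z0, of "e/2"] e by simp
  show "\<forall>\<^sub>F n in sequentially. dist (\<Sum>k=1..N n - 1. tm n k - idl n k) 0 < e"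
    using ev1 ev2 ev3 ev4
  proof eventually_elim
    case (elim n)
    have "\<bar>\<Sum>k=1..N n - 1. tm n k - idl n k\<bar> \<le> 60 * c^5 * \<kappa>\<^sup>2 * T * \<epsilon> +
     (c + 1) * (5 * c ^ 4 * (36 * C\<^sup>2 + 4 * \<kappa>\<^sup>2)) * ((2 * mx n powr (3/4) / mx n) * mx n powr (1 - 2 * \<gamma>) * (2 * mx n powr (3/4)) powr (2*\<gamma>))"
      using elim by (intro sum_est[OF eps(1) C2p C1p]) auto
    also have "\<dots> = A * \<epsilon> + K * mx n powr (3/4 - \<gamma>/2)"
      unfolding Z_eq[OF mx_pos] A_def K_def by (simp only: mult_ac)
    also have "\<dots> < e" using eps elim by linarith
    finally show ?case by simp
  qed
qed

end


lemma gfun_isCont: "0 < x \<Longrightarrow> isCont (gfun \<gamma>) x"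
  unfolding gfun_def by (intro continuous_intros) auto

lemma gfun_cont_on: "0 < a \<Longrightarrow> continuous_on {a..b} (gfun \<gamma>)"
  by (intro continuous_at_imp_continuous_on ballI gfun_isCont) auto

lemma gfun_zero: "gfun \<gamma> 0 = 0" unfolding gfun_def by simp

context main begin

lemma idl_eq: "1 \<le> k \<Longrightarrow> k \<le> N n - 1 \<Longrightarrow> idl n k = 2 * \<kappa>\<^sup>2 * Dt tp n (k+1) * gfun \<gamma> (Dt tp n k / Dt tp n (k+1))"
  unfolding idl_def using Dt_pos[of k n] Dt_pos[of "k+1" n] by (intro termf_ideal) auto

lemma sum_Dt_shift: "(\<Sum>k=1..j. Dt tp n (k+1)) = tp n (j+1) - tp n 1"
  by (induction j) (auto simp: Dt_def)

lemma sum_b: "(\<Sum>k=1..N n - 1. Dt tp n (k+1)) = T - tp n 1"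
  using sum_Dt_shift[where j="N n - 1" and n=n] N_pos[of n] tpN[of n] by simp

lemma rho_bounds: "1 \<le> k \<Longrightarrow> k \<le> N n - 1 \<Longrightarrow> 1/c \<le> Dt tp n k / Dt tp n (k+1) \<and> Dt tp n k / Dt tp n (k+1) \<le> c"
proof -
  assume k: "1 \<le> k" "k \<le> N n - 1"
  define m where "m = mx n"
  have m: "0 < m" using mx_pos by (simp add: m_def)
  have a: "m / c \<le> Dt tp n k" "Dt tp n k \<le> m" using Dt_bounds[of k n] k by (auto simp: m_def)
  have b: "m / c \<le> Dt tp n (k+1)" "Dt tp n (k+1) \<le> m" using Dt_bounds[of "k+1" n] k by (auto simp: m_def)
  have bp: "0 < Dt tp n (k+1)" using Dt_pos[of "k+1" n] k by auto
  have ap: "0 < Dt tp n k" using Dt_pos[of k n] k by auto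
  have "1/c = (m/c) / m" using m by simp
  also have "\<dots> \<le> Dt tp n k / Dt tp n (k+1)" using a b m c1 bp ap by (intro frac_le) auto
  finally have l: "1/c \<le> Dt tp n k / Dt tp n (k+1)" .
  have "Dt tp n k / Dt tp n (k+1) \<le> m / (m / c)" using a b m c1 bp ap by (intro frac_le) auto
  also have "\<dots> = c" using m c1 by simp
  finally show ?thesis using l by simp
qed

lemma sum_idl: "(\<Sum>k=1..N n - 1. idl n k) = 2 * \<kappa>\<^sup>2 * (\<Sum>k=1..N n - 1. Dt tp n (k+1) * gfun \<gamma> (Dt tp n k / Dt tp n (k+1)))"
  by (simp add: sum_distrib_left idl_eq mult.assoc)

lemma partA:
  assumes rat: "has_asymptotic_ratios N tp ell"
    and inv: "invariant_on (gfun \<gamma>) (ratio_range ell)" and l: "l \<in> ratio_range ell"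
  shows "(\<lambda>n. \<Sum>k=1..N n - 1. idl n k) \<longlonglongrightarrow> 2 * \<kappa>\<^sup>2 * gfun \<gamma> l * T"
proof -
  define K where "K = {1/(2*c)..2*c}"
  have Kc: "continuous_on K (gfun \<gamma>)" unfolding K_def using c1 by (intro gfun_cont_on) auto
  have uc: "uniformly_continuous_on K (gfun \<gamma>)"
    by (rule compact_uniformly_continuous[OF Kc]) (simp add: K_def)
  have S: "(\<lambda>n. \<Sum>k=1..N n - 1. Dt tp n (k+1) * gfun \<gamma> (Dt tp n k / Dt tp n (k+1))) \<longlonglongrightarrow> gfun \<gamma> l * T"
  proof (rule tendstoI)
    fix e :: real assume e: "e > 0"
    obtain d where d: "d > 0" and dP: "\<And>x y. x \<in> K \<Longrightarrow> y \<in> K \<Longrightarrow> dist y x < d \<Longrightarrow> dist (gfun \<gamma> y) (gfun \<gamma> x) < e / (2*T)"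
      using uc e T_pos unfolding uniformly_continuous_on_def
      by (metis divide_pos_pos mult_pos_pos zero_less_numeral)
    define d' where "d' = min d (1/(2*c))"
    have d': "d' > 0" "d' \<le> d" "d' \<le> 1/(2*c)" using d c1 by (auto simp: d'_def)
    have ev1: "\<forall>\<^sub>F n in sequentially. \<forall>k. 2 \<le> k \<and> k \<le> N n \<longrightarrow> \<bar>Dt tp n (k - 1) / Dt tp n k - ell k\<bar> < d'"
      using rat d' unfolding has_asymptotic_ratios_def by blast
    have ev2: "\<forall>\<^sub>F n in sequentially. \<bar>gfun \<gamma> l\<bar> * mx n < e / 2"
      using order_tendstoD(2)[OF tendsto_mult_right_zero[OF mx_lim, of "\<bar>gfun \<gamma> l\<bar>"], of "e/2"] e by simp
    show "\<forall>\<^sub>F n in sequentially. dist (\<Sum>k=1..N n - 1. Dt tp n (k+1) * gfun \<gamma> (Dt tp n k / Dt tp n (k+1))) (gfun \<gamma> l * T) < e"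
      using ev1 ev2
    proof eventually_elim
      case (elim n)
      have pk: "\<bar>gfun \<gamma> (Dt tp n k / Dt tp n (k+1)) - gfun \<gamma> l\<bar> \<le> e / (2*T)" if k: "k \<in> {1..N n - 1}" for k
      proof -
        define \<rho> where "\<rho> = Dt tp n k / Dt tp n (k+1)"
        have r: "1/c \<le> \<rho>" "\<rho> \<le> c" using rho_bounds[of k n] k by (auto simp: \<rho>_def)
        have cl: "\<bar>\<rho> - ell (k+1)\<bar> < d'" using elim(1)[rule_format, of "k+1"] k by (auto simp: \<rho>_def)
        have c2: "1/(2*c) \<le> 1/c - 1/(2*c)" using c1 by (simp add: field_simps)
        have rK: "\<rho> \<in> K" using r c1 unfolding K_def by (auto simp: field_simps)
        have h1: "1/(2*c) \<le> c"
        proof -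
          have "1 \<le> c * c" using c1 by (metis mult_mono' mult_1 zero_le_one)
          then show ?thesis using c1 by (simp add: field_simps)
        qed
        have h2: "1/c - 1/(2*c) = 1/(2*c)" using c1 by (simp add: field_simps)
        have lK: "ell (k+1) \<in> K" using r cl d' h1 h2 unfolding K_def by auto
        have gl: "gfun \<gamma> (ell (k+1)) = gfun \<gamma> l"
          using inv l unfolding invariant_on_def ratio_range_def by auto
        have "dist (gfun \<gamma> \<rho>) (gfun \<gamma> (ell (k+1))) < e / (2*T)"
          using dP[OF lK rK] cl d' by (simp add: dist_real_def)
        then show ?thesis using gl by (simp add: dist_real_def \<rho>_def)
      qed
      have "\<bar>(\<Sum>k=1..N n - 1. Dt tp n (k+1) * gfun \<gamma> (Dt tp n k / Dt tp n (k+1))) - gfun \<gamma> l * T\<bar>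
          = \<bar>(\<Sum>k=1..N n - 1. Dt tp n (k+1) * (gfun \<gamma> (Dt tp n k / Dt tp n (k+1)) - gfun \<gamma> l)) - gfun \<gamma> l * tp n 1\<bar>"
      proof -
        have "(\<Sum>k=1..N n - 1. Dt tp n (k+1) * (gfun \<gamma> (Dt tp n k / Dt tp n (k+1)) - gfun \<gamma> l))
            = (\<Sum>k=1..N n - 1. Dt tp n (k+1) * gfun \<gamma> (Dt tp n k / Dt tp n (k+1))) - (\<Sum>k=1..N n - 1. Dt tp n (k+1)) * gfun \<gamma> l"
          by (simp add: sum_subtractf right_diff_distrib sum_distrib_right)
        then show ?thesis unfolding sum_b by (simp add: algebra_simps)
      qed
      also have "\<dots> \<le> (\<Sum>k=1..N n - 1. Dt tp n (k+1) * (e / (2*T))) + \<bar>gfun \<gamma> l\<bar> * mx n"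
      proof -
        have "\<bar>\<Sum>k=1..N n - 1. Dt tp n (k+1) * (gfun \<gamma> (Dt tp n k / Dt tp n (k+1)) - gfun \<gamma> l)\<bar>
            \<le> (\<Sum>k=1..N n - 1. \<bar>Dt tp n (k+1) * (gfun \<gamma> (Dt tp n k / Dt tp n (k+1)) - gfun \<gamma> l)\<bar>)" by (rule sum_abs)
        also have "\<dots> \<le> (\<Sum>k=1..N n - 1. Dt tp n (k+1) * (e / (2*T)))"
        proof (rule sum_mono)
          fix k assume k: "k \<in> {1..N n - 1}"
          have bp: "0 < Dt tp n (k+1)" using Dt_pos[of "k+1" n] k by auto
          show "\<bar>Dt tp n (k+1) * (gfun \<gamma> (Dt tp n k / Dt tp n (k+1)) - gfun \<gamma> l)\<bar> \<le> Dt tp n (k+1) * (e / (2*T))"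
            unfolding abs_mult using pk[OF k] bp by (intro mult_mono) auto
        qed
        finally have A: "\<bar>\<Sum>k=1..N n - 1. Dt tp n (k+1) * (gfun \<gamma> (Dt tp n k / Dt tp n (k+1)) - gfun \<gamma> l)\<bar>
            \<le> (\<Sum>k=1..N n - 1. Dt tp n (k+1) * (e / (2*T)))" .
        have B: "\<bar>gfun \<gamma> l * tp n 1\<bar> \<le> \<bar>gfun \<gamma> l\<bar> * mx n"
          using tp1_le[of n] tp_range[of 1 n] N_pos[of n] by (simp add: abs_mult mult_left_mono)
        from A B show ?thesis by linarith
      qed
      also have "(\<Sum>k=1..N n - 1. Dt tp n (k+1) * (e / (2*T))) = (T - tp n 1) * (e / (2*T))"
        unfolding sum_distrib_right[symmetric] sum_b ..
      also have "(T - tp n 1) * (e / (2*T)) \<le> e / 2"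
      proof -
        have "0 \<le> tp n 1" using tp_range[of 1 n] N_pos[of n] by simp
        then have "(T - tp n 1) * (e / (2*T)) \<le> T * (e / (2*T))" using e T_pos by (intro mult_right_mono) auto
        also have "\<dots> = e / 2" using T_pos by simp
        finally show ?thesis .
      qed
      finally show ?case using elim(2) by (simp add: dist_real_def)
    qed
  qed
  show ?thesis unfolding sum_idl using tendsto_mult[OF tendsto_const[of "2 * \<kappa>\<^sup>2"] S] by (simp add: mult.assoc)
qed

end


context main begin

definition rho where "rho n t = (\<Sum>k=1..N n - 1. (Dt tp n k / Dt tp n (k+1)) * indicator {tp n k..<tp n (k+1)} t)"

lemma g_rho: "gfun \<gamma> (rho n t) = (\<Sum>k=1..N n - 1. gfun \<gamma> (Dt tp n k / Dt tp n (k+1)) * indicator {tp n k..<tp n (k+1)} t)"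
proof (cases "tp n 1 \<le> t \<and> t < T")
  case True
  then obtain j where j: "1 \<le> j" "j \<le> N n - 1" "tp n j \<le> t" "t < tp n (j+1)" using locate1 by blast
  show ?thesis unfolding rho_def onehot[OF j] ..
next
  case False
  then have f: "t < tp n 1 \<or> T \<le> t" by auto
  show ?thesis unfolding rho_def onehot0[OF f] gfun_zero ..
qed

lemma rho_range: "rho n t = 0 \<or> (1/c \<le> rho n t \<and> rho n t \<le> c)"
proof (cases "tp n 1 \<le> t \<and> t < T")
  case True
  then obtain j where j: "1 \<le> j" "j \<le> N n - 1" "tp n j \<le> t" "t < tp n (j+1)" using locate1 by blast
  show ?thesis unfolding rho_def onehot[OF j] using rho_bounds[OF j(1,2)] by simp
next
  case False
  then have f: "t < tp n 1 \<or> T \<le> t" by auto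
  show ?thesis unfolding rho_def onehot0[OF f] by simp
qed

lemma ind_int:
  assumes "0 \<le> a" "a \<le> b" "b \<le> T"
  shows "((\<lambda>t. indicator {a..<b} t :: real) has_integral (b - a)) {0..T}"
proof -
  have "((\<lambda>x::real. 1::real) has_integral (b - a)) ({a..b} \<inter> {0..T})"
  proof -
    have eq: "{a..b} \<inter> {0..T} = {a..b}" using assms by auto
    have H: "((\<lambda>x::real. 1::real) has_integral (b - a)) {a..b}"
      using has_integral_const_real[of "1::real" a b] assms by simp
    show ?thesis unfolding eq by (rule H)
  qed
  then have HH: "((\<lambda>x. if x \<in> {a..b} then 1 else 0) has_integral (b - a)) {0..T}"
    by (subst has_integral_restrict_Int)
  show ?thesis
    by (rule has_integral_spike_finite[where S="{b}", OF _ _ HH]) (auto simp: indicator_def)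
qed

lemma step_int: "((\<lambda>t. gfun \<gamma> (rho n t)) has_integral
     (\<Sum>k=1..N n - 1. gfun \<gamma> (Dt tp n k / Dt tp n (k+1)) * Dt tp n (k+1))) {0..T}"
  unfolding g_rho
proof (rule has_integral_sum, simp)
  fix k assume k: "k \<in> {1..N n - 1}"
  have "((\<lambda>t. indicator {tp n k..<tp n (k+1)} t :: real) has_integral (tp n (k+1) - tp n k)) {0..T}"
    using tp_range[of k n] tp_range[of "k+1" n] tp_mono[of k "k+1" n] k by (intro ind_int) auto
  then show "((\<lambda>t. gfun \<gamma> (Dt tp n k / Dt tp n (k+1)) * indicator {tp n k..<tp n (k+1)} t) has_integral
      gfun \<gamma> (Dt tp n k / Dt tp n (k+1)) * Dt tp n (k+1)) {0..T}"
    unfolding Dt_def by (simp add: has_integral_mult_right)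
qed

lemma rho_lim:
  assumes rat: "has_asymptotic_ratios N tp ell"
    and U: "\<forall>\<epsilon>>0. \<forall>\<^sub>F n in sequentially. \<forall>t\<in>{tp n 1..<T}. \<bar>ell_step N tp ell n t - ellf t\<bar> \<le> \<epsilon>"
    and t: "0 < t" "t < T"
  shows "(\<lambda>n. rho n t) \<longlonglongrightarrow> ellf t"
proof (rule tendstoI)
  fix e :: real assume e: "e > 0"
  define \<epsilon> where "\<epsilon> = e / 5"
  have eps: "\<epsilon> > 0" using e by (simp add: \<epsilon>_def)
  have U\<epsilon>: "\<forall>\<^sub>F n in sequentially. \<forall>s\<in>{tp n 1..<T}. \<bar>ell_step N tp ell n s - ellf s\<bar> \<le> \<epsilon>"
    using U eps by blast
  have Mt: "\<forall>\<^sub>F n in sequentially. mx n < t" using order_tendstoD(2)[OF mx_lim t(1)] .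
  obtain N0 where N0: "\<And>n. n \<ge> N0 \<Longrightarrow> (\<forall>s\<in>{tp n 1..<T}. \<bar>ell_step N tp ell n s - ellf s\<bar> \<le> \<epsilon>) \<and> mx n < t"
    using eventually_conj[OF U\<epsilon> Mt] unfolding eventually_sequentially by blast
  define n3 where "n3 = N0"
  have U3: "\<forall>s\<in>{tp n3 1..<T}. \<bar>ell_step N tp ell n3 s - ellf s\<bar> \<le> \<epsilon>" and t3: "tp n3 1 \<le> t"
    using N0[of n3] tp1_le[of n3] by (auto simp: n3_def)
  obtain j where j: "1 \<le> j" "j \<le> N n3 - 1" "tp n3 j \<le> t" "t < tp n3 (j+1)" using locate1[OF t3 t(2)] by blast
  define r where "r = tp n3 (j+1) - t"
  have r: "r > 0" using j by (simp add: r_def)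
  have near: "\<bar>ellf y - ellf t\<bar> \<le> 2 * \<epsilon>" if y: "t \<le> y" "y < t + r" for y
  proof -
    have jN: "tp n3 (j+1) \<le> T" using tp_range[of "j+1" n3] j by auto
    have t1j: "tp n3 1 \<le> tp n3 j" using tp_mono[of 1 j n3] j by auto
    have ey: "ell_step N tp ell n3 y = ell j"
      unfolding ell_step_def using j y r_def by (intro onehot) auto
    have et: "ell_step N tp ell n3 t = ell j"
      unfolding ell_step_def using j by (intro onehot) auto
    have "y \<in> {tp n3 1..<T}" using y r_def jN t1j j by auto
    then have "\<bar>ell j - ellf y\<bar> \<le> \<epsilon>" using U3 ey by fastforce
    moreover have "t \<in> {tp n3 1..<T}" using t jN t1j j by auto
    then have "\<bar>ell j - ellf t\<bar> \<le> \<epsilon>" using U3 et by fastforce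
    ultimately show ?thesis by linarith
  qed
  have H1: "\<forall>\<^sub>F n in sequentially. \<forall>k. 2 \<le> k \<and> k \<le> N n \<longrightarrow> \<bar>Dt tp n (k - 1) / Dt tp n k - ell k\<bar> < \<epsilon>"
    using rat eps unfolding has_asymptotic_ratios_def by blast
  have M2: "\<forall>\<^sub>F n in sequentially. mx n < r" using order_tendstoD(2)[OF mx_lim r] .
  have M3: "\<forall>\<^sub>F n in sequentially. mx n < T - t" using order_tendstoD(2)[OF mx_lim] t by simp
  show "\<forall>\<^sub>F n in sequentially. dist (rho n t) (ellf t) < e"
    using H1 U\<epsilon> Mt M2 M3
  proof eventually_elim
    case (elim n)
    have t1: "tp n 1 \<le> t" using tp1_le[of n] elim by simp
    obtain k where k: "1 \<le> k" "k \<le> N n - 1" "tp n k \<le> t" "t < tp n (k+1)" using locate1[OF t1 t(2)] by blast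
    have rk: "rho n t = Dt tp n k / Dt tp n (k+1)" unfolding rho_def by (rule onehot[OF k])
    have kN: "k + 1 \<le> N n" using k N_pos[of n] by arith
    have tk1: "tp n (k+1) \<le> t + mx n"
      using Dt_le[of "k+1" n] k kN unfolding Dt_def by auto
    have tk1T: "tp n (k+1) < T" using tk1 elim by simp
    have k1N: "k + 1 \<le> N n - 1"
    proof (rule ccontr)
      assume "\<not> k + 1 \<le> N n - 1"
      then have "k + 1 = N n" using k by auto
      then show False using tk1T tpN[of n] by simp
    qed
    have lt: "tp n (k+1) < tp n (k+1+1)" using tpS[of "k+1" n] k1N by simp
    have es: "ell_step N tp ell n (tp n (k+1)) = ell (k+1)"
      unfolding ell_step_def using k1N k lt by (intro onehot) auto
    have t1k: "tp n 1 \<le> tp n (k+1)" using tp_mono[of 1 "k+1" n] k1N by auto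
    have "tp n (k+1) \<in> {tp n 1..<T}" using t1k tk1T by auto
    then have a1: "\<bar>ell (k+1) - ellf (tp n (k+1))\<bar> \<le> \<epsilon>" using elim(2) es by fastforce
    have a2: "\<bar>Dt tp n k / Dt tp n (k+1) - ell (k+1)\<bar> < \<epsilon>" using elim(1)[rule_format, of "k+1"] k k1N by auto
    have a3: "\<bar>ellf (tp n (k+1)) - ellf t\<bar> \<le> 2 * \<epsilon>" using near[of "tp n (k+1)"] k tk1 elim by auto
    have "\<bar>rho n t - ellf t\<bar> < 4 * \<epsilon>" unfolding rk using a1 a2 a3 by linarith
    then show ?case using e by (simp add: dist_real_def \<epsilon>_def)
  qed
qed

end


context main begin

lemma partB:
  assumes rat: "has_asymptotic_ratios N tp ell"
    and U: "\<forall>\<epsilon>>0. \<forall>\<^sub>F n in sequentially. \<forall>t\<in>{tp n 1..<T}. \<bar>ell_step N tp ell n t - ellf t\<bar> \<le> \<epsilon>"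
  shows "(\<lambda>n. \<Sum>k=1..N n - 1. idl n k) \<longlonglongrightarrow> 2 * \<kappa>\<^sup>2 * integral {0..T} (\<lambda>t. gfun \<gamma> (ellf t))"
proof -
  have "compact (gfun \<gamma> ` {1/c..c})"
    by (rule compact_continuous_image[OF gfun_cont_on]) (use c1 in auto)
  then obtain G where G: "\<And>y. y \<in> gfun \<gamma> ` {1/c..c} \<Longrightarrow> norm y \<le> G"
    using compact_imp_bounded bounded_iff by metis
  have G0: "0 \<le> G" using G[of "gfun \<gamma> 1"] c1 by (auto simp: field_simps)
  have gr: "\<bar>gfun \<gamma> (rho n t)\<bar> \<le> G" for n t
    using rho_range[of n t]
  proof
    assume "rho n t = 0" then show ?thesis using G0 by (simp add: gfun_zero)
  next
    assume "1/c \<le> rho n t \<and> rho n t \<le> c"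
    then show ?thesis using G[of "gfun \<gamma> (rho n t)"] by auto
  qed
  define Mb where "Mb = G + \<bar>gfun \<gamma> (ellf 0)\<bar> + \<bar>gfun \<gamma> (ellf T)\<bar>"
  define f where "f n t = (if t \<in> {0<..<T} then gfun \<gamma> (rho n t) else gfun \<gamma> (ellf t))" for n t
  define S where "S n = (\<Sum>k=1..N n - 1. gfun \<gamma> (Dt tp n k / Dt tp n (k+1)) * Dt tp n (k+1))" for n
  have fi: "(f n has_integral S n) {0..T}" for n
    unfolding S_def
    by (rule has_integral_spike_finite[where S="{0,T}", OF _ _ step_int]) (auto simp: f_def)
  have conv: "(\<lambda>n. f n x) \<longlonglongrightarrow> gfun \<gamma> (ellf x)" if x: "x \<in> {0..T}" for x
  proof (cases "x \<in> {0<..<T}")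
    case True
    then have x0: "0 < x" "x < T" by auto
    have rl: "(\<lambda>n. rho n x) \<longlonglongrightarrow> ellf x" by (rule rho_lim[OF rat U x0])
    have ev: "\<forall>\<^sub>F n in sequentially. 1/c \<le> rho n x"
      using order_tendstoD(2)[OF mx_lim x0(1)]
    proof eventually_elim
      case (elim n)
      then have t1: "tp n 1 \<le> x" using tp1_le[of n] by simp
      obtain j where j: "1 \<le> j" "j \<le> N n - 1" "tp n j \<le> x" "x < tp n (j+1)" using locate1[OF t1 x0(2)] by blast
      show ?case unfolding rho_def onehot[OF j] using rho_bounds[OF j(1,2)] by simp
    qed
    have "1/c \<le> ellf x" by (rule tendsto_lowerbound[OF rl ev]) simp
    then have pos: "0 < ellf x" using c1 by (smt (verit) divide_pos_pos)
    have "(\<lambda>n. gfun \<gamma> (rho n x)) \<longlonglongrightarrow> gfun \<gamma> (ellf x)"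
      by (rule isCont_tendsto_compose[OF gfun_isCont[OF pos] rl])
    then show ?thesis using True by (simp add: f_def)
  next
    case False
    then have "f n x = gfun \<gamma> (ellf x)" for n unfolding f_def by auto
    then show ?thesis by simp
  qed
  have le: "norm (f n x) \<le> Mb" if "x \<in> {0..T}" for n x
  proof (cases "x \<in> {0<..<T}")
    case True then show ?thesis using gr[of n x] by (simp add: f_def Mb_def)
  next
    case False
    then have "x = 0 \<or> x = T" using that by auto
    then show ?thesis using G0 by (auto simp: f_def Mb_def)
  qed
  have DC: "(\<lambda>k. integral {0..T} (f k)) \<longlonglongrightarrow> integral {0..T} (\<lambda>x. gfun \<gamma> (ellf x))"
    by (rule dominated_convergence(2)[where h="\<lambda>_. Mb"])
      (use fi le conv in \<open>auto intro: has_integral_integrable\<close>)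
  have "integral {0..T} (f k) = S k" for k using fi by (rule integral_unique)
  then have Slim: "S \<longlonglongrightarrow> integral {0..T} (\<lambda>x. gfun \<gamma> (ellf x))" using DC by simp
  have "(\<Sum>k=1..N n - 1. idl n k) = 2 * \<kappa>\<^sup>2 * S n" for n
    unfolding sum_idl S_def by (simp add: mult.commute)
  then show ?thesis using tendsto_mult[OF tendsto_const[of "2 * \<kappa>\<^sup>2"] Slim] by simp
qed

end

theorem proposition1:
  fixes M :: "'a measure" and X :: "real \<Rightarrow> 'a \<Rightarrow> real"
    and T \<gamma> \<kappa> :: real and N :: "nat \<Rightarrow> nat" and tp :: "nat \<Rightarrow> nat \<Rightarrow> real"
    and ell :: "nat \<Rightarrow> real"
  assumes "T > 0"
    and "prob_space M"
    and "\<And>t. t \<in> {0..T} \<Longrightarrow> X t \<in> borel_measurable M"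
    and "\<And>t. t \<in> {0..T} \<Longrightarrow> integrable M (\<lambda>\<omega>. (X t \<omega>)\<^sup>2)"
    and "\<And>t. t \<in> {0..T} \<Longrightarrow> (\<integral>\<omega>. X t \<omega> \<partial>M) = 0"
    and "0 < \<gamma>" "\<gamma> < 1" "\<kappa> > 0"
    and "cond_C1 M X \<gamma>"
    and "cond_C2 M X T \<gamma> \<kappa>"
    and "partition_seq T N tp"
    and "has_asymptotic_ratios N tp ell"
  shows "(invariant_on (gfun \<gamma>) (ratio_range ell) \<longrightarrow>
            (\<forall>l\<in>ratio_range ell.
               (\<lambda>n. \<integral>\<omega>. V2 \<gamma> N tp (\<lambda>s. X s \<omega>) n \<partial>M)
                 \<longlonglongrightarrow> 2 * \<kappa>\<^sup>2 * gfun \<gamma> l * T))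
       \<and> (\<forall>ellf :: real \<Rightarrow> real.
            (\<forall>\<epsilon>>0. \<forall>\<^sub>F n in sequentially. \<forall>t\<in>{tp n 1..<T}.
                \<bar>ell_step N tp ell n t - ellf t\<bar> \<le> \<epsilon>) \<longrightarrow>
            (\<lambda>n. \<integral>\<omega>. V2 \<gamma> N tp (\<lambda>s. X s \<omega>) n \<partial>M)
              \<longlonglongrightarrow> 2 * \<kappa>\<^sup>2 * integral {0..T} (\<lambda>t. gfun \<gamma> (ellf t)))"
proof -
  note A = assms
  obtain c where c1: "c \<ge> 1" and cm: "\<And>n. mesh_max N tp n \<le> c * mesh_min N tp n"
    using A(12) unfolding has_asymptotic_ratios_def by blast
  interpret main T N tp c M X \<gamma> \<kappa>
    by unfold_locales (use A c1 cm in auto)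
  have EV: "(\<lambda>n. \<integral>\<omega>. V2 \<gamma> N tp (\<lambda>s. X s \<omega>) n \<partial>M) =
      (\<lambda>n. (\<Sum>k=1..N n - 1. idl n k) + (\<Sum>k=1..N n - 1. tm n k - idl n k))"
  proof
    fix n
    have "(\<integral>\<omega>. V2 \<gamma> N tp (\<lambda>s. X s \<omega>) n \<partial>M) = (\<Sum>k=1..N n - 1. tm n k)"
      unfolding tm_def by (rule E_V2) (rule tp_range)
    then show "(\<integral>\<omega>. V2 \<gamma> N tp (\<lambda>s. X s \<omega>) n \<partial>M) = (\<Sum>k=1..N n - 1. idl n k) + (\<Sum>k=1..N n - 1. tm n k - idl n k)"
      by (simp add: sum_subtractf)
  qed
  have MLim: "(\<lambda>n. \<Sum>k=1..N n - 1. tm n k - idl n k) \<longlonglongrightarrow> 0" by (rule main_lim[OF A(9) A(10)])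
  show ?thesis
  proof (intro conjI impI allI ballI)
    fix l
    assume inv: "invariant_on (gfun \<gamma>) (ratio_range ell)"
    assume lr: "l \<in> ratio_range ell"
    show "(\<lambda>n. \<integral>\<omega>. V2 \<gamma> N tp (\<lambda>s. X s \<omega>) n \<partial>M) \<longlonglongrightarrow> 2 * \<kappa>\<^sup>2 * gfun \<gamma> l * T"
      unfolding EV using tendsto_add[OF partA[OF A(12) inv lr] MLim] by simp
  next
    fix ellf :: "real \<Rightarrow> real"
    assume U: "\<forall>\<epsilon>>0. \<forall>\<^sub>F n in sequentially. \<forall>t\<in>{tp n 1..<T}. \<bar>ell_step N tp ell n t - ellf t\<bar> \<le> \<epsilon>"
    show "(\<lambda>n. \<integral>\<omega>. V2 \<gamma> N tp (\<lambda>s. X s \<omega>) n \<partial>M) \<longlonglongrightarrow> 2 * \<kappa>\<^sup>2 * integral {0..T} (\<lambda>t. gfun \<gamma> (ellf t))"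
      unfolding EV using tendsto_add[OF partB[OF A(12) U] MLim] by simp
  qed
qed

end
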